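(* Let $n\ge1$, let $\mathrm{d}_I$ be the interleaving distance on the category of cubically encoded persistence modules over $\mathbb R^n$ with respect to the vector $v=(1,\dots,1)\in\mathbb R^n$, and let $\mathrm{d}_{\|\cdot\|_1}$ be the path metric on this category induced by the Hilbert amplitude $\|M\|_1=\int_{\mathbb R^n}\dim M(x)\,d\lambda(x)$, $\lambda$ the Lebesgue measure. Then for all cubically encoded persistence modules $M,N$ over $\mathbb R^n$, \[ \mathrm{d}_I(M,N)\le 4\big(\mathrm{d}_{\|\cdot\|_1}(M,N)\big)^{1/n}. \]
   Context: $\mathrm{Vect}$ is the category of finite-dimensional vector spaces over a fixed field. A cube in $\mathbb R^n$ is a product $I_1\times\dots\times I_n$ of (possibly unbounded, open/closed/half-open) intervals of $\mathbb R$. A persistence module $M\colon\mathbb R^n\to\mathrm{Vect}$ is cubically encoded if there exist a finite poset $\mathcal P$, an order-preserving map $e\colon\mathbb R^n\to\mathcal P$ whose fibers are finite unions of cubes, a functor $M'\colon\mathcal P\to\mathrm{Vect}$ and an isomorphism $M\cong M'\circ e$; these form a full abelian subcategory of $\mathrm{Vect}^{\mathbb R^n}$. For a vector $v$ and $\varepsilon\ge0$, $M^{+\varepsilon}$ denotes $x\mapsto M(x+\varepsilon v)$. An $\varepsilon$-interleaving between $M$ and $N$ is a pair of natural transformations $\varphi\colon M\to N^{+\varepsilon}$, $\psi\colon N\to M^{+\varepsilon}$ with $\psi_{x+\varepsilon v}\circ\varphi_x=M(x\le x+2\varepsilon v)$ and $\varphi_{x+\varepsilon v}\circ\psi_x=N(x\le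 x+2\varepsilon v)$ for all $x$; $\mathrm{d}_I(M,N)$ is the infimum of $\varepsilon>0$ admitting an $\varepsilon$-interleaving ($\inf\emptyset=\infty$). For an amplitude $\alpha$ on an abelian category $\mathcal{A}$ (a function $\operatorname{ob}\mathcal{A}\to[0,\infty]$ with $\alpha(0)=0$, monotone under sub- and quotient objects in short exact sequences and subadditive: $\alpha(B)\le\alpha(A)+\alpha(C)$ for $0\to A\to B\to C\to0$ exact), the cost of a zigzag $A\xleftarrow{\gamma_1}C_1\xrightarrow{\gamma_2}\cdots\xleftarrow{\gamma_{n-1}}C_n\xrightarrow{\gamma_n}B$ is $\sum_i\alpha(\ker\gamma_i)+\alpha(\operatorname{coker}\gamma_i)$, and the path metric $\mathrm{d}_\alpha(A,B)$ is the infimum of costs of zigzags from $A$ to $B$ ($\inf\emptyset=\infty$). The Hilbert amplitude $\|\cdot\|_1$ is an amplitude on cubically encoded modules. *)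

theory Defs
  imports "HOL-Analysis.Analysis" "Jordan_Normal_Form.DL_Rank"
begin

text \<open>Persistence modules R^n -> Vect over a field 'k, represented in the skeleton of Vect:
  the space at x is 'k^(D x) and the structure maps are matrices F x y for x <= y
  (componentwise order on real^'n).\<close>

type_synonym ('k, 'n) pmod = "(real^'n \<Rightarrow> nat) \<times> (real^'n \<Rightarrow> real^'n \<Rightarrow> 'k mat)"
type_synonym ('k, 'n) pmor = "real^'n \<Rightarrow> 'k mat"

definition pdim :: "('k, 'n) pmod \<Rightarrow> real^'n \<Rightarrow> nat" where
  "pdim M = fst M"

definition pmap :: "('k, 'n) pmod \<Rightarrow> real^'n \<Rightarrow> real^'n \<Rightarrow> 'k mat" where
  "pmap M = snd M"

definition is_pmod :: "('k::field, 'n::finite) pmod \<Rightarrow> bool" where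
  "is_pmod M \<longleftrightarrow>
     (\<forall>x y. x \<le> y \<longrightarrow> pmap M x y \<in> carrier_mat (pdim M y) (pdim M x)) \<and>
     (\<forall>x. pmap M x x = 1\<^sub>m (pdim M x)) \<and>
     (\<forall>x y z. x \<le> y \<longrightarrow> y \<le> z \<longrightarrow> pmap M y z * pmap M x y = pmap M x z)"

definition is_pmor :: "('k::field, 'n::finite) pmod \<Rightarrow> ('k, 'n) pmod \<Rightarrow> ('k, 'n) pmor \<Rightarrow> bool" where
  "is_pmor M N g \<longleftrightarrow>
     (\<forall>x. g x \<in> carrier_mat (pdim N x) (pdim M x)) \<and>
     (\<forall>x y. x \<le> y \<longrightarrow> g y * pmap M x y = pmap N x y * g x)"

definition is_cube :: "(real^'n::finite) set \<Rightarrow> bool" where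
  "is_cube C \<longleftrightarrow> (\<exists>I :: 'n \<Rightarrow> real set. (\<forall>i. is_interval (I i)) \<and> C = {x. \<forall>i. x $ i \<in> I i})"

definition finite_union_of_cubes :: "(real^'n::finite) set \<Rightarrow> bool" where
  "finite_union_of_cubes S \<longleftrightarrow> (\<exists>\<C>. finite \<C> \<and> (\<forall>C\<in>\<C>. is_cube C) \<and> S = \<Union>\<C>)"

text \<open>Cubically encoded modules.  The finite poset is a finite set P of naturals with a
  partial order le on P; the functor M' : P -> Vect is given by dimensions d and matrices G.\<close>
definition cubically_encoded :: "('k::field, 'n::finite) pmod \<Rightarrow> bool" where
  "cubically_encoded M \<longleftrightarrow> is_pmod M \<and>
    (\<exists>(P :: nat set) (le :: nat \<Rightarrow> nat \<Rightarrow> bool) (e :: real^'n \<Rightarrow> nat)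
       (d :: nat \<Rightarrow> nat) (G :: nat \<Rightarrow> nat \<Rightarrow> 'k mat) (\<eta> :: real^'n \<Rightarrow> 'k mat) (\<theta> :: real^'n \<Rightarrow> 'k mat).
      finite P \<and>
      (\<forall>p\<in>P. le p p) \<and>
      (\<forall>p\<in>P. \<forall>q\<in>P. le p q \<longrightarrow> le q p \<longrightarrow> p = q) \<and>
      (\<forall>p\<in>P. \<forall>q\<in>P. \<forall>r\<in>P. le p q \<longrightarrow> le q r \<longrightarrow> le p r) \<and>
      (\<forall>x. e x \<in> P) \<and>
      (\<forall>x y. x \<le> y \<longrightarrow> le (e x) (e y)) \<and>
      (\<forall>p\<in>P. finite_union_of_cubes {x. e x = p}) \<and>
      (\<forall>p\<in>P. \<forall>q\<in>P. le p q \<longrightarrow> G p q \<in> carrier_mat (d q) (d p)) \<and>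
      (\<forall>p\<in>P. G p p = 1\<^sub>m (d p)) \<and>
      (\<forall>p\<in>P. \<forall>q\<in>P. \<forall>r\<in>P. le p q \<longrightarrow> le q r \<longrightarrow> G q r * G p q = G p r) \<and>
      (\<forall>x. \<eta> x \<in> carrier_mat (d (e x)) (pdim M x) \<and> \<theta> x \<in> carrier_mat (pdim M x) (d (e x)) \<and>
           \<theta> x * \<eta> x = 1\<^sub>m (pdim M x) \<and> \<eta> x * \<theta> x = 1\<^sub>m (d (e x))) \<and>
      (\<forall>x y. x \<le> y \<longrightarrow> \<eta> y * pmap M x y = G (e x) (e y) * \<eta> x))"

definition vshift :: "real \<Rightarrow> real^'n::finite \<Rightarrow> real^'n" where
  "vshift \<epsilon> x = x + (\<chi> i. \<epsilon>)"

definition interleaving :: "real \<Rightarrow> ('k::field, 'n::finite) pmod \<Rightarrow> ('k, 'n) pmod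
    \<Rightarrow> ('k, 'n) pmor \<Rightarrow> ('k, 'n) pmor \<Rightarrow> bool" where
  "interleaving \<epsilon> M N \<phi> \<psi> \<longleftrightarrow>
     (\<forall>x. \<phi> x \<in> carrier_mat (pdim N (vshift \<epsilon> x)) (pdim M x)) \<and>
     (\<forall>x y. x \<le> y \<longrightarrow> \<phi> y * pmap M x y = pmap N (vshift \<epsilon> x) (vshift \<epsilon> y) * \<phi> x) \<and>
     (\<forall>x. \<psi> x \<in> carrier_mat (pdim M (vshift \<epsilon> x)) (pdim N x)) \<and>
     (\<forall>x y. x \<le> y \<longrightarrow> \<psi> y * pmap N x y = pmap M (vshift \<epsilon> x) (vshift \<epsilon> y) * \<psi> x) \<and>
     (\<forall>x. \<psi> (vshift \<epsilon> x) * \<phi> x = pmap M x (vshift (2 * \<epsilon>) x)) \<and>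
     (\<forall>x. \<phi> (vshift \<epsilon> x) * \<psi> x = pmap N x (vshift (2 * \<epsilon>) x))"

definition interleaving_distance :: "('k::field, 'n::finite) pmod \<Rightarrow> ('k, 'n) pmod \<Rightarrow> ennreal" where
  "interleaving_distance M N =
     Inf (ennreal ` {\<epsilon>. \<epsilon> > 0 \<and> (\<exists>\<phi> \<psi>. interleaving \<epsilon> M N \<phi> \<psi>)})"

definition hilbert_amp :: "(real^'n::finite \<Rightarrow> nat) \<Rightarrow> ennreal" where
  "hilbert_amp D = (\<integral>\<^sup>+ x. ennreal (real (D x)) \<partial>lborel)"

text \<open>Pointwise dimensions of kernel and cokernel of a morphism g : A -> B:
  (ker g)(x) = ker (g x), (coker g)(x) = B(x) / im (g x).\<close>
definition ker_dim :: "('k::field, 'n::finite) pmod \<Rightarrow> ('k, 'n) pmod \<Rightarrow> ('k, 'n) pmor \<Rightarrow> real^'n \<Rightarrow> nat" where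
  "ker_dim A B g x = pdim A x - vec_space.rank (pdim B x) (g x)"

definition coker_dim :: "('k::field, 'n::finite) pmod \<Rightarrow> ('k, 'n) pmod \<Rightarrow> ('k, 'n) pmor \<Rightarrow> real^'n \<Rightarrow> nat" where
  "coker_dim A B g x = pdim B x - vec_space.rank (pdim B x) (g x)"

definition arrow_cost :: "('k::field, 'n::finite) pmod \<Rightarrow> ('k, 'n) pmod \<Rightarrow> ('k, 'n) pmor \<Rightarrow> ennreal" where
  "arrow_cost A B g = hilbert_amp (ker_dim A B g) + hilbert_amp (coker_dim A B g)"

text \<open>Zigzag A = X 0 <-l1- C 1 -r1-> X 1 <-l2- ... -rm-> X m = B in the category of
  cubically encoded modules, and its cost.\<close>
definition is_zigzag :: "('k::field, 'n::finite) pmod \<Rightarrow> ('k, 'n) pmod \<Rightarrow> nat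
    \<Rightarrow> (nat \<Rightarrow> ('k, 'n) pmod) \<Rightarrow> (nat \<Rightarrow> ('k, 'n) pmod)
    \<Rightarrow> (nat \<Rightarrow> ('k, 'n) pmor) \<Rightarrow> (nat \<Rightarrow> ('k, 'n) pmor) \<Rightarrow> bool" where
  "is_zigzag A B m X C l r \<longleftrightarrow>
     X 0 = A \<and> X m = B \<and>
     (\<forall>i\<le>m. cubically_encoded (X i)) \<and>
     (\<forall>i\<in>{1..m}. cubically_encoded (C i) \<and>
        is_pmor (C i) (X (i - 1)) (l i) \<and> is_pmor (C i) (X i) (r i))"

definition zigzag_cost :: "nat \<Rightarrow> (nat \<Rightarrow> ('k::field, 'n::finite) pmod) \<Rightarrow> (nat \<Rightarrow> ('k, 'n) pmod)
    \<Rightarrow> (nat \<Rightarrow> ('k, 'n) pmor) \<Rightarrow> (nat \<Rightarrow> ('k, 'n) pmor) \<Rightarrow> ennreal" where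
  "zigzag_cost m X C l r =
     (\<Sum>i\<in>{1..m}. arrow_cost (C i) (X (i - 1)) (l i) + arrow_cost (C i) (X i) (r i))"

definition hilbert_path_metric :: "('k::field, 'n::finite) pmod \<Rightarrow> ('k, 'n) pmod \<Rightarrow> ennreal" where
  "hilbert_path_metric A B =
     Inf {zigzag_cost m X C l r | m X C l r. is_zigzag A B m X C l r}"

end

theory Submission
  imports Defs
begin

lemma rank_mult_le_left:
  fixes A :: "'a::field mat"
  assumes A: "A \<in> carrier_mat n k" and B: "B \<in> carrier_mat k j"
  shows "vec_space.rank n (A * B) \<le> vec_space.rank n A"
proof -
  interpret vs: vec_space "TYPE('a)" n .
  have AB: "A * B \<in> carrier_mat n j" using A B by auto
  have sub: "vs.col_space (A * B) \<subseteq> vs.col_space A"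
    unfolding vs.col_space_eq[OF A] vs.col_space_eq[OF AB]
  proof safe
    fix x :: "'a vec" assume x: "x \<in> carrier_vec (dim_col (A * B))"
    show "\<exists>y\<in>carrier_vec (dim_col A). A *\<^sub>v y = A * B *\<^sub>v x"
      using x A B by (intro bexI[of _ "B *\<^sub>v x"]) (auto simp: assoc_mult_mat_vec)
  qed (use A B in auto)
  have cA: "set (cols A) \<subseteq> carrier_vec n" using A cols_dim[of A] by (metis carrier_matD(1))
  have cAB: "set (cols (A*B)) \<subseteq> carrier_vec n" using AB cols_dim[of "A*B"] by (metis carrier_matD(1))
  have s1: "subspace class_ring (vs.col_space A) vs.V"
    unfolding vs.col_space_def using vs.span_is_subspace cA by auto
  have s2: "subspace class_ring (vs.col_space (A*B)) vs.V"
    unfolding vs.col_space_def using vs.span_is_subspace cAB by auto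
  have s3: "subspace class_ring (vs.col_space (A*B)) (vs.vs (vs.col_space A))"
    using vs.nested_subspaces[OF s1 s2 sub] .
  have vA: "vectorspace class_ring (vs.vs (vs.col_space A))" using vs.subspace_is_vs[OF s1] .
  have fA: "vectorspace.fin_dim class_ring (vs.vs (vs.col_space A))"
    using vs.fin_dim_span_cols[OF A] unfolding vs.col_space_def .
  have fAB: "vectorspace.fin_dim class_ring (vs.vs (vs.col_space (A*B)))"
    using vs.fin_dim_span_cols[OF AB] unfolding vs.col_space_def .
  have "vectorspace.dim class_ring ((vs.vs (vs.col_space A))\<lparr>carrier := vs.col_space (A*B)\<rparr>)
      \<le> vectorspace.dim class_ring (vs.vs (vs.col_space A))"
    by (rule vectorspace.subspace_dim[OF vA s3 fA]) (use fAB in simp)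
  then show ?thesis unfolding vs.rank_def vs.col_space_def by simp
qed

lemma rank_mult_le_right:
  fixes A :: "'a::field mat"
  assumes P: "P \<in> carrier_mat m n" and A: "A \<in> carrier_mat n k"
  shows "vec_space.rank m (P * A) \<le> vec_space.rank n A"
proof -
  interpret vs: vec_space "TYPE('a)" n .
  interpret ws: vec_space "TYPE('a)" m .
  have PA: "P * A \<in> carrier_mat m k" using P A by auto
  have cA: "set (cols A) \<subseteq> carrier_vec n" using A cols_dim[of A] by (metis carrier_matD(1))
  have s1: "subspace class_ring (vs.col_space A) vs.V"
    unfolding vs.col_space_def using vs.span_is_subspace cA by auto
  have vA: "vectorspace class_ring (vs.vs (vs.col_space A))" using vs.subspace_is_vs[OF s1] .
  have fA: "vectorspace.fin_dim class_ring (vs.vs (vs.col_space A))"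
    using vs.fin_dim_span_cols[OF A] unfolding vs.col_space_def .
  have csub: "vs.col_space A \<subseteq> carrier_vec n"
    unfolding vs.col_space_eq[OF A] using A by auto
  have lm: "linear_map class_ring (vs.vs (vs.col_space A)) ws.V (\<lambda>v. P *\<^sub>v v)"
    unfolding linear_map_def mod_hom_def mod_hom_axioms_def
  proof (intro conjI)
    show "vectorspace class_ring (vs.vs (vs.col_space A))" by (rule vA)
    show "vectorspace class_ring ws.V" by (rule ws.vectorspace_axioms)
    show "Module.module class_ring (vs.vs (vs.col_space A))" using vA by (simp add: vectorspace_def)
    show "Module.module class_ring ws.V" by (rule ws.module_axioms)
    show "(\<lambda>v. P *\<^sub>v v) \<in> LinearCombinations.module_hom class_ring (vs.vs (vs.col_space A)) ws.V"
      unfolding LinearCombinations.module_hom_def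
    proof (intro CollectI conjI allI impI)
      show "(\<lambda>v. P *\<^sub>v v) \<in> carrier (vs.vs (vs.col_space A)) \<rightarrow> carrier ws.V"
        using csub P by auto
      fix m1 m2 :: "'a vec" assume "m1 \<in> carrier (vs.vs (vs.col_space A)) \<and> m2 \<in> carrier (vs.vs (vs.col_space A))"
      then have "m1 \<in> carrier_vec n" "m2 \<in> carrier_vec n" using csub by auto
      then show "P *\<^sub>v (m1 \<oplus>\<^bsub>vs.vs (vs.col_space A)\<^esub> m2) = (P *\<^sub>v m1) \<oplus>\<^bsub>ws.V\<^esub> (P *\<^sub>v m2)"
        using P by (simp add: mult_add_distrib_mat_vec)
    next
      fix r :: 'a and m :: "'a vec" assume "r \<in> carrier class_ring \<and> m \<in> carrier (vs.vs (vs.col_space A))"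
      then have "m \<in> carrier_vec n" using csub by auto
      then show "P *\<^sub>v (r \<odot>\<^bsub>vs.vs (vs.col_space A)\<^esub> m) = r \<odot>\<^bsub>ws.V\<^esub> (P *\<^sub>v m)"
        using P by (simp add: mult_mat_vec)
    qed
  qed
  have im: "mod_hom.im (vs.vs (vs.col_space A)) (\<lambda>v. P *\<^sub>v v) = ws.col_space (P * A)"
  proof -
    have mh: "mod_hom class_ring (vs.vs (vs.col_space A)) ws.V (\<lambda>v. P *\<^sub>v v)"
      using lm unfolding linear_map_def by simp
    have "mod_hom.im (vs.vs (vs.col_space A)) (\<lambda>v. P *\<^sub>v v) = (\<lambda>v. P *\<^sub>v v) ` vs.col_space A"
      by (simp add: mod_hom.im_def[OF mh])
    also have "\<dots> = ws.col_space (P * A)"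
      unfolding ws.col_space_eq[OF PA] vs.col_space_eq[OF A]
      using P A by (auto simp: image_def) (metis (no_types) assoc_mult_mat_vec carrier_matD(2) mult_mat_vec_carrier)+
    finally show ?thesis .
  qed
  have rn: "vectorspace.dim class_ring (ws.vs (mod_hom.im (vs.vs (vs.col_space A)) (\<lambda>v. P *\<^sub>v v)))
     + vectorspace.dim class_ring ((vs.vs (vs.col_space A))\<lparr>carrier := mod_hom.ker (vs.vs (vs.col_space A)) ws.V (\<lambda>v. P *\<^sub>v v)\<rparr>)
     = vectorspace.dim class_ring (vs.vs (vs.col_space A))"
    by (rule linear_map.rank_nullity[OF lm fA])
  from rn have "vectorspace.dim class_ring (ws.vs (ws.col_space (P * A))) \<le> vectorspace.dim class_ring (vs.vs (vs.col_space A))"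
    unfolding im by linarith
  then show ?thesis unfolding vs.rank_def ws.rank_def vs.col_space_def ws.col_space_def .
qed

lemma rank_one_mat: "vec_space.rank n (1\<^sub>m n :: 'a::field mat) = n"
  using vec_space.det_rank_iff[of "1\<^sub>m n :: 'a mat" n] by simp

lemma rank_le_rows:
  fixes A :: "'a::field mat"
  assumes A: "A \<in> carrier_mat n k"
  shows "vec_space.rank n A \<le> n"
  using rank_mult_le_left[OF one_carrier_mat[of n] A] A rank_one_mat[where 'a='a, of n] by simp

lemma rank_left_inv:
  fixes A :: "'a::field mat"
  assumes P: "P \<in> carrier_mat m n" and P': "P' \<in> carrier_mat n m" and PP: "P' * P = 1\<^sub>m n"
    and A: "A \<in> carrier_mat n k"
  shows "vec_space.rank m (P * A) = vec_space.rank n A"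
proof -
  have "vec_space.rank n A = vec_space.rank n (P' * (P * A))"
    using P P' A PP by (simp add: assoc_mult_mat[symmetric])
  also have "\<dots> \<le> vec_space.rank m (P * A)" using rank_mult_le_right[OF P', of "P * A" k] P A by simp
  finally show ?thesis using rank_mult_le_right[OF P A] by simp
qed

lemma rank_right_inv:
  fixes A :: "'a::field mat"
  assumes Q: "Q \<in> carrier_mat k j" and Q': "Q' \<in> carrier_mat j k" and QQ: "Q * Q' = 1\<^sub>m k"
    and A: "A \<in> carrier_mat n k"
  shows "vec_space.rank n (A * Q) = vec_space.rank n A"
proof -
  have "vec_space.rank n A = vec_space.rank n ((A * Q) * Q')"
    using Q Q' A QQ by (simp add: assoc_mult_mat)
  also have "\<dots> \<le> vec_space.rank n (A * Q)" using rank_mult_le_left[OF _ Q'] Q A by simp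
  finally show ?thesis using rank_mult_le_left[OF A Q] by simp
qed

lemma dims_eq_of_inverse:
  fixes T :: "'a::field mat"
  assumes T: "T \<in> carrier_mat a b" and E: "E \<in> carrier_mat b a"
    and TE: "T * E = 1\<^sub>m a" and ET: "E * T = 1\<^sub>m b"
  shows "a = b"
proof -
  have "a = vec_space.rank a (T * E)" using TE rank_one_mat[where 'a='a] by simp
  also have "\<dots> \<le> vec_space.rank a T" by (rule rank_mult_le_left[OF T E])
  also have "\<dots> \<le> b" by (rule vec_space.rank_le_nc[OF T])
  finally have 1: "a \<le> b" .
  have "b = vec_space.rank b (E * T)" using ET rank_one_mat[where 'a='a] by simp
  also have "\<dots> \<le> vec_space.rank b E" by (rule rank_mult_le_left[OF E T])
  also have "\<dots> \<le> a" by (rule vec_space.rank_le_nc[OF E])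
  finally show ?thesis using 1 by simp
qed

lemma full_rank_inverse:
  fixes g :: "'a::field mat"
  assumes g: "g \<in> carrier_mat b a" and ka: "a \<le> vec_space.rank b g" and kb: "b \<le> vec_space.rank b g"
  shows "a = b \<and> (\<exists>h \<in> carrier_mat a b. h * g = 1\<^sub>m a \<and> g * h = 1\<^sub>m b)"
proof -
  have r1: "vec_space.rank b g \<le> a" by (rule vec_space.rank_le_nc[OF g])
  have r2: "vec_space.rank b g \<le> b" by (rule rank_le_rows[OF g])
  have ab: "a = b" using r1 r2 ka kb by simp
  have g': "g \<in> carrier_mat b b" using g ab by simp
  have "det g \<noteq> 0" using vec_space.det_rank_iff[OF g'] r2 kb by simp
  from det_non_zero_imp_unit[OF g' this, of "()"]
  obtain h where "h \<in> carrier_mat b b" "h * g = 1\<^sub>m b" "g * h = 1\<^sub>m b"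
    unfolding Units_def by (auto simp: ring_mat_simps)
  then show ?thesis using ab by auto
qed

lemma vshift_nth[simp]: "vshift e x $ i = x $ i + e"
  by (simp add: vshift_def)

lemma vshift_le_iff: "vshift a x \<le> vshift b y \<longleftrightarrow> (\<forall>i. x $ i + a \<le> y $ i + b)"
  by (simp add: Finite_Cartesian_Product.less_eq_vec_def)

lemma le_vshift_iff: "x \<le> vshift b y \<longleftrightarrow> (\<forall>i. x $ i \<le> y $ i + b)"
  by (simp add: Finite_Cartesian_Product.less_eq_vec_def)

lemma vshift_le_iff2: "vshift a x \<le> y \<longleftrightarrow> (\<forall>i. x $ i + a \<le> y $ i)"
  by (simp add: Finite_Cartesian_Product.less_eq_vec_def)

lemma vshift_vshift[simp]: "vshift a (vshift b x) = vshift (a + b) x"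
  by (simp add: vshift_def Finite_Cartesian_Product.vec_eq_iff)

lemma vshift_0[simp]: "vshift 0 x = x"
  by (simp add: vshift_def Finite_Cartesian_Product.vec_eq_iff)

definition ihyp :: "real \<Rightarrow> (real^'n) set \<Rightarrow> ('k::field, 'n::finite) pmod \<Rightarrow> ('k, 'n) pmod
    \<Rightarrow> ('k, 'n) pmor \<Rightarrow> ('k, 'n) pmor \<Rightarrow> bool" where
  "ihyp e G M N \<Phi> \<Psi> \<longleftrightarrow> is_pmod M \<and> is_pmod N \<and> e \<ge> 0 \<and>
     (\<forall>x. \<exists>y\<in>G. x \<le> y \<and> y \<le> vshift e x) \<and>
     (\<forall>y\<in>G. \<Phi> y \<in> carrier_mat (pdim N y) (pdim M y) \<and> \<Psi> y \<in> carrier_mat (pdim M y) (pdim N y) \<and>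
        \<Psi> y * \<Phi> y = 1\<^sub>m (pdim M y) \<and> \<Phi> y * \<Psi> y = 1\<^sub>m (pdim N y)) \<and>
     (\<forall>y\<in>G. \<forall>y'\<in>G. y \<le> y' \<longrightarrow> \<Phi> y' * pmap M y y' = pmap N y y' * \<Phi> y)"

lemma pmod_carrier: "is_pmod M \<Longrightarrow> x \<le> y \<Longrightarrow> pmap M x y \<in> carrier_mat (pdim M y) (pdim M x)"
  unfolding is_pmod_def by blast

lemma pmod_comp: "is_pmod M \<Longrightarrow> x \<le> y \<Longrightarrow> y \<le> z \<Longrightarrow> pmap M y z * pmap M x y = pmap M x z"
  unfolding is_pmod_def by blast

lemma pmod_id: "is_pmod M \<Longrightarrow> pmap M x x = 1\<^sub>m (pdim M x)"
  unfolding is_pmod_def by blast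

lemma ihyp_sym:
  assumes H: "ihyp e G M N \<Phi> \<Psi>"
  shows "ihyp e G N M \<Psi> \<Phi>"
proof -
  have nat: "\<Psi> y' * pmap N y y' = pmap M y y' * \<Psi> y" if y: "y \<in> G" "y' \<in> G" "y \<le> y'" for y y'
  proof -
    have M: "is_pmod M" and N: "is_pmod N" using H by (auto simp: ihyp_def)
    have c: "\<Phi> y \<in> carrier_mat (pdim N y) (pdim M y)" "\<Psi> y \<in> carrier_mat (pdim M y) (pdim N y)"
       "\<Phi> y' \<in> carrier_mat (pdim N y') (pdim M y')" "\<Psi> y' \<in> carrier_mat (pdim M y') (pdim N y')"
       "\<Psi> y * \<Phi> y = 1\<^sub>m (pdim M y)" "\<Phi> y * \<Psi> y = 1\<^sub>m (pdim N y)"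
       "\<Psi> y' * \<Phi> y' = 1\<^sub>m (pdim M y')" "\<Phi> y' * \<Psi> y' = 1\<^sub>m (pdim N y')"
      using H y unfolding ihyp_def by auto
    have n: "\<Phi> y' * pmap M y y' = pmap N y y' * \<Phi> y" using H y unfolding ihyp_def by auto
    have cM: "pmap M y y' \<in> carrier_mat (pdim M y') (pdim M y)" using pmod_carrier[OF M y(3)] .
    have cN: "pmap N y y' \<in> carrier_mat (pdim N y') (pdim N y)" using pmod_carrier[OF N y(3)] .
    have cNP: "pmap N y y' * \<Phi> y \<in> carrier_mat (pdim N y') (pdim M y)" using cN c by auto
    have "\<Psi> y' * pmap N y y' = \<Psi> y' * (pmap N y y' * (\<Phi> y * \<Psi> y))"
      using c cN by simp
    also have "\<dots> = \<Psi> y' * ((pmap N y y' * \<Phi> y) * \<Psi> y)"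
      by (simp add: assoc_mult_mat[OF cN c(1) c(2)])
    also have "\<dots> = \<Psi> y' * (pmap N y y' * \<Phi> y) * \<Psi> y"
      by (simp add: assoc_mult_mat[OF c(4) cNP c(2)])
    also have "\<dots> = \<Psi> y' * (\<Phi> y' * pmap M y y') * \<Psi> y" by (simp add: n)
    also have "\<dots> = (\<Psi> y' * \<Phi> y') * pmap M y y' * \<Psi> y"
      by (simp add: assoc_mult_mat[OF c(4) c(3) cM])
    also have "\<dots> = pmap M y y' * \<Psi> y" using c cM by simp
    finally show ?thesis .
  qed
  then show ?thesis using H unfolding ihyp_def by auto
qed

lemma assoc4_1:
  assumes "A \<in> carrier_mat a b" "B \<in> carrier_mat b c" "C \<in> carrier_mat c d" "D \<in> carrier_mat d e"
  shows "A * (B * C) * D = A * B * (C * D)"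
proof -
  have "A * (B * C) * D = A * B * C * D" by (simp only: assoc_mult_mat[OF assms(1-3)])
  also have "\<dots> = A * B * (C * D)" by (rule assoc_mult_mat[OF mult_carrier_mat[OF assms(1,2)] assms(3,4)])
  finally show ?thesis .
qed

definition gp :: "real \<Rightarrow> (real^'n::finite) set \<Rightarrow> real^'n \<Rightarrow> real^'n" where
  "gp e G x = (SOME y. y \<in> G \<and> x \<le> y \<and> y \<le> vshift e x)"

lemma gp:
  assumes "\<forall>x. \<exists>y\<in>G. x \<le> y \<and> y \<le> vshift e x"
  shows "gp e G x \<in> G" "x \<le> gp e G x" "gp e G x \<le> vshift e x"
proof -
  have "\<exists>y. y \<in> G \<and> x \<le> y \<and> y \<le> vshift e x" using assms by blast
  from someI_ex[OF this] show "gp e G x \<in> G" "x \<le> gp e G x" "gp e G x \<le> vshift e x"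
    unfolding gp_def by auto
qed

definition mk :: "real \<Rightarrow> (real^'n) set \<Rightarrow> ('k::field, 'n::finite) pmod \<Rightarrow> ('k, 'n) pmod
    \<Rightarrow> ('k, 'n) pmor \<Rightarrow> ('k, 'n) pmor" where
  "mk e G M N \<Phi> x = pmap N (gp e G x) (vshift (2 * e) x) * \<Phi> (gp e G x) * pmap M x (gp e G x)"

lemma ihyp_core:
  assumes H: "ihyp e G M N \<Phi> \<Psi>"
    and y: "y \<in> G" "y2 \<in> G" "x \<le> y" "y \<le> y2" "y2 \<le> w"
  shows "pmap N y w * \<Phi> y * pmap M x y = pmap N y2 w * \<Phi> y2 * pmap M x y2"
proof -
  have M: "is_pmod M" and N: "is_pmod N" using H by (auto simp: ihyp_def)
  have c1: "\<Phi> y \<in> carrier_mat (pdim N y) (pdim M y)" "\<Phi> y2 \<in> carrier_mat (pdim N y2) (pdim M y2)"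
    using H y unfolding ihyp_def by auto
  have n: "\<Phi> y2 * pmap M y y2 = pmap N y y2 * \<Phi> y" using H y unfolding ihyp_def by auto
  have yw: "y \<le> w" using y order.trans by blast
  have cM1: "pmap M x y \<in> carrier_mat (pdim M y) (pdim M x)" using pmod_carrier[OF M y(3)] .
  have cM2: "pmap M y y2 \<in> carrier_mat (pdim M y2) (pdim M y)" using pmod_carrier[OF M y(4)] .
  have cN1: "pmap N y y2 \<in> carrier_mat (pdim N y2) (pdim N y)" using pmod_carrier[OF N y(4)] .
  have cN2: "pmap N y2 w \<in> carrier_mat (pdim N w) (pdim N y2)" using pmod_carrier[OF N y(5)] .
  have "pmap N y w * \<Phi> y * pmap M x y = (pmap N y2 w * pmap N y y2) * \<Phi> y * pmap M x y"
    using pmod_comp[OF N y(4) y(5)] by simp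
  also have "\<dots> = pmap N y2 w * (pmap N y y2 * \<Phi> y) * pmap M x y"
    by (simp add: assoc_mult_mat[OF cN2 cN1 c1(1)])
  also have "\<dots> = pmap N y2 w * (\<Phi> y2 * pmap M y y2) * pmap M x y" by (simp add: n)
  also have "\<dots> = pmap N y2 w * \<Phi> y2 * (pmap M y y2 * pmap M x y)"
    by (rule assoc4_1[OF cN2 c1(2) cM2 cM1])
  also have "\<dots> = pmap N y2 w * \<Phi> y2 * pmap M x y2"
    using pmod_comp[OF M y(3) y(4)] by simp
  finally show ?thesis .
qed

lemma assoc4_2:
  assumes "A \<in> carrier_mat a b" "B \<in> carrier_mat b c" "C \<in> carrier_mat c d" "D \<in> carrier_mat d e"
  shows "A * (B * C * D) = A * B * C * D"
proof -
  have "A * (B * C * D) = A * (B * C) * D"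
    by (rule assoc_mult_mat[OF assms(1) mult_carrier_mat[OF assms(2,3)] assms(4), symmetric])
  also have "\<dots> = A * B * C * D" by (simp only: assoc_mult_mat[OF assms(1-3)])
  finally show ?thesis .
qed

lemma vshift_mono: "x \<le> y \<Longrightarrow> vshift e x \<le> vshift e y"
  by (simp add: vshift_le_iff Finite_Cartesian_Product.less_eq_vec_def)

lemma vshift_mono2: "a \<le> b \<Longrightarrow> vshift a x \<le> vshift b x"
  by (simp add: vshift_le_iff)

lemma mk_carrier:
  assumes H: "ihyp e G M N \<Phi> \<Psi>"
  shows "mk e G M N \<Phi> x \<in> carrier_mat (pdim N (vshift (2 * e) x)) (pdim M x)"
proof -
  have M: "is_pmod M" and N: "is_pmod N" and e: "e \<ge> 0" and cov: "\<forall>x. \<exists>y\<in>G. x \<le> y \<and> y \<le> vshift e x"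
    using H by (auto simp: ihyp_def)
  note g = gp[OF cov, of x]
  have "vshift e x \<le> vshift (2 * e) x" using e by (intro vshift_mono2) simp
  then have yw: "gp e G x \<le> vshift (2 * e) x" using g(3) order.trans by blast
  have "\<Phi> (gp e G x) \<in> carrier_mat (pdim N (gp e G x)) (pdim M (gp e G x))"
    using H g(1) unfolding ihyp_def by auto
  then show ?thesis unfolding mk_def
    using pmod_carrier[OF N yw] pmod_carrier[OF M g(2)] by auto
qed

lemma mk_nat:
  assumes H: "ihyp e G M N \<Phi> \<Psi>" and xx: "x \<le> x'"
  shows "mk e G M N \<Phi> x' * pmap M x x' = pmap N (vshift (2 * e) x) (vshift (2 * e) x') * mk e G M N \<Phi> x"
proof -
  have M: "is_pmod M" and N: "is_pmod N" and e: "e \<ge> 0" and cov: "\<forall>x. \<exists>y\<in>G. x \<le> y \<and> y \<le> vshift e x"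
    using H by (auto simp: ihyp_def)
  define y where "y = gp e G x"
  define y' where "y' = gp e G x'"
  define y2 where "y2 = gp e G (vshift e x')"
  define w where "w = vshift (2 * e) x"
  define w' where "w' = vshift (2 * e) x'"
  have g: "y \<in> G" "x \<le> y" "y \<le> vshift e x" using gp[OF cov, of x] unfolding y_def by auto
  have g': "y' \<in> G" "x' \<le> y'" "y' \<le> vshift e x'" using gp[OF cov, of x'] unfolding y'_def by auto
  have g2: "y2 \<in> G" "vshift e x' \<le> y2" "y2 \<le> vshift e (vshift e x')" using gp[OF cov, of "vshift e x'"] unfolding y2_def by auto
  have ee: "vshift e (vshift e x') = w'" unfolding w'_def vshift_vshift
    by (rule arg_cong[where f="\<lambda>a. vshift a x'"]) simp
  have ww: "w \<le> w'" unfolding w_def w'_def by (rule vshift_mono[OF xx])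
  have ex: "vshift e x \<le> w" unfolding w_def using e by (intro vshift_mono2) simp
  have ex': "vshift e x' \<le> w'" unfolding w'_def using e by (intro vshift_mono2) simp
  have yw: "y \<le> w" using g(3) ex order.trans by blast
  have y'w': "y' \<le> w'" using g'(3) ex' order.trans by blast
  have y'y2: "y' \<le> y2" using g'(3) g2(2) order.trans by blast
  have yy2: "y \<le> y2" using g(3) vshift_mono[OF xx, of e] g2(2) order.trans by blast
  have y2w': "y2 \<le> w'" using g2(3) ee by simp
  have xy': "x \<le> y'" using xx g'(2) order.trans by blast
  have cP: "\<Phi> y \<in> carrier_mat (pdim N y) (pdim M y)" "\<Phi> y' \<in> carrier_mat (pdim N y') (pdim M y')"
    using H g(1) g'(1) unfolding ihyp_def by auto
  have c1: "pmap N y' w' \<in> carrier_mat (pdim N w') (pdim N y')" using pmod_carrier[OF N y'w'] .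
  have c2: "pmap M x' y' \<in> carrier_mat (pdim M y') (pdim M x')" using pmod_carrier[OF M g'(2)] .
  have c3: "pmap M x x' \<in> carrier_mat (pdim M x') (pdim M x)" using pmod_carrier[OF M xx] .
  have c4: "pmap N w w' \<in> carrier_mat (pdim N w') (pdim N w)" using pmod_carrier[OF N ww] .
  have c5: "pmap N y w \<in> carrier_mat (pdim N w) (pdim N y)" using pmod_carrier[OF N yw] .
  have c6: "pmap M x y \<in> carrier_mat (pdim M y) (pdim M x)" using pmod_carrier[OF M g(2)] .
  have "mk e G M N \<Phi> x' * pmap M x x' = pmap N y' w' * \<Phi> y' * pmap M x' y' * pmap M x x'"
    unfolding mk_def y'_def w'_def ..
  also have "\<dots> = pmap N y' w' * \<Phi> y' * (pmap M x' y' * pmap M x x')"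
    by (rule assoc_mult_mat[OF mult_carrier_mat[OF c1 cP(2)] c2 c3])
  also have "\<dots> = pmap N y' w' * \<Phi> y' * pmap M x y'" using pmod_comp[OF M xx g'(2)] by simp
  also have "\<dots> = pmap N y2 w' * \<Phi> y2 * pmap M x y2"
    by (rule ihyp_core[OF H g'(1) g2(1) xy' y'y2 y2w'])
  also have "\<dots> = pmap N y w' * \<Phi> y * pmap M x y"
    by (rule ihyp_core[OF H g(1) g2(1) g(2) yy2 y2w', symmetric])
  also have "\<dots> = pmap N w w' * pmap N y w * \<Phi> y * pmap M x y" using pmod_comp[OF N yw ww] by simp
  also have "\<dots> = pmap N w w' * (pmap N y w * \<Phi> y * pmap M x y)"
    by (rule assoc4_2[OF c4 c5 cP(1) c6, symmetric])
  also have "\<dots> = pmap N (vshift (2 * e) x) (vshift (2 * e) x') * mk e G M N \<Phi> x"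
    unfolding mk_def y_def w_def w'_def ..
  finally show ?thesis .
qed


lemma mk_comp:
  assumes H: "ihyp e G M N \<Phi> \<Psi>"
  shows "mk e G N M \<Psi> (vshift (2 * e) x) * mk e G M N \<Phi> x = pmap M x (vshift (2 * (2 * e)) x)"
proof -
  have M: "is_pmod M" and N: "is_pmod N" and e: "e \<ge> 0" and cov: "\<forall>x. \<exists>y\<in>G. x \<le> y \<and> y \<le> vshift e x"
    using H by (auto simp: ihyp_def)
  define z where "z = vshift (2 * e) x"
  define t where "t = vshift (2 * e) z"
  define y where "y = gp e G x"
  define y2 where "y2 = gp e G z"
  have g: "y \<in> G" "x \<le> y" "y \<le> vshift e x" using gp[OF cov, of x] unfolding y_def by auto
  have g2: "y2 \<in> G" "z \<le> y2" "y2 \<le> vshift e z" using gp[OF cov, of z] unfolding y2_def by auto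
  have ex: "vshift e x \<le> z" unfolding z_def using e by (intro vshift_mono2) simp
  have ez: "vshift e z \<le> t" unfolding t_def using e by (intro vshift_mono2) simp
  have yz: "y \<le> z" using g(3) ex order.trans by blast
  have y2t: "y2 \<le> t" using g2(3) ez order.trans by blast
  have yy2: "y \<le> y2" using yz g2(2) order.trans by blast
  have xy2: "x \<le> y2" using g(2) yy2 order.trans by blast
  have tt: "t = vshift (2 * (2 * e)) x" unfolding t_def z_def vshift_vshift
    by (rule arg_cong[where f="\<lambda>a. vshift a x"]) simp
  have cP: "\<Phi> y \<in> carrier_mat (pdim N y) (pdim M y)" "\<Phi> y2 \<in> carrier_mat (pdim N y2) (pdim M y2)"
     "\<Psi> y2 \<in> carrier_mat (pdim M y2) (pdim N y2)" "\<Psi> y2 * \<Phi> y2 = 1\<^sub>m (pdim M y2)"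
    using H g(1) g2(1) unfolding ihyp_def by auto
  have n: "\<Phi> y2 * pmap M y y2 = pmap N y y2 * \<Phi> y" using H g(1) g2(1) yy2 unfolding ihyp_def by auto
  have c1: "pmap N z y2 \<in> carrier_mat (pdim N y2) (pdim N z)" using pmod_carrier[OF N g2(2)] .
  have c2: "pmap N y z \<in> carrier_mat (pdim N z) (pdim N y)" using pmod_carrier[OF N yz] .
  have c3: "pmap M x y \<in> carrier_mat (pdim M y) (pdim M x)" using pmod_carrier[OF M g(2)] .
  have c4: "pmap M y y2 \<in> carrier_mat (pdim M y2) (pdim M y)" using pmod_carrier[OF M yy2] .
  have c5: "pmap M y2 t \<in> carrier_mat (pdim M t) (pdim M y2)" using pmod_carrier[OF M y2t] .
  have c6: "pmap M x y2 \<in> carrier_mat (pdim M y2) (pdim M x)" using pmod_carrier[OF M xy2] .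
  define K where "K = pmap N y z * \<Phi> y * pmap M x y"
  have cK: "K \<in> carrier_mat (pdim N z) (pdim M x)" unfolding K_def using c2 cP c3 by auto
  have K: "mk e G M N \<Phi> x = K" unfolding K_def mk_def y_def z_def ..
  have "pmap N z y2 * K = pmap N z y2 * pmap N y z * \<Phi> y * pmap M x y"
    unfolding K_def by (rule assoc4_2[OF c1 c2 cP(1) c3])
  also have "\<dots> = pmap N y y2 * \<Phi> y * pmap M x y" using pmod_comp[OF N yz g2(2)] by simp
  also have "\<dots> = \<Phi> y2 * pmap M y y2 * pmap M x y" using n by simp
  also have "\<dots> = \<Phi> y2 * (pmap M y y2 * pmap M x y)" by (rule assoc_mult_mat[OF cP(2) c4 c3])
  also have "\<dots> = \<Phi> y2 * pmap M x y2" using pmod_comp[OF M g(2) yy2] by simp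
  finally have NK: "pmap N z y2 * K = \<Phi> y2 * pmap M x y2" .
  have "mk e G N M \<Psi> z * K = pmap M y2 t * \<Psi> y2 * pmap N z y2 * K"
    unfolding mk_def y2_def t_def ..
  also have "\<dots> = pmap M y2 t * \<Psi> y2 * (pmap N z y2 * K)"
    by (rule assoc_mult_mat[OF mult_carrier_mat[OF c5 cP(3)] c1 cK])
  also have "\<dots> = pmap M y2 t * \<Psi> y2 * (\<Phi> y2 * pmap M x y2)" by (simp only: NK)
  also have "\<dots> = pmap M y2 t * (\<Psi> y2 * \<Phi> y2) * pmap M x y2"
    by (rule assoc4_1[OF c5 cP(3) cP(2) c6, symmetric])
  also have "\<dots> = pmap M y2 t * pmap M x y2" using c5 cP(4) by simp
  also have "\<dots> = pmap M x t" using pmod_comp[OF M xy2 y2t] .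
  finally have "mk e G N M \<Psi> z * K = pmap M x t" .
  then show ?thesis by (simp only: K z_def[symmetric] tt)
qed

lemma ihyp_interleaving:
  assumes H: "ihyp e G M N \<Phi> \<Psi>"
  shows "interleaving (2 * e) M N (mk e G M N \<Phi>) (mk e G N M \<Psi>)"
proof -
  have H': "ihyp e G N M \<Psi> \<Phi>" by (rule ihyp_sym[OF H])
  show ?thesis unfolding interleaving_def
  proof (intro conjI allI impI)
    fix x show "mk e G M N \<Phi> x \<in> carrier_mat (pdim N (vshift (2 * e) x)) (pdim M x)" by (rule mk_carrier[OF H])
    show "mk e G N M \<Psi> x \<in> carrier_mat (pdim M (vshift (2 * e) x)) (pdim N x)" by (rule mk_carrier[OF H'])
    show "mk e G N M \<Psi> (vshift (2 * e) x) * mk e G M N \<Phi> x = pmap M x (vshift (2 * (2 * e)) x)" by (rule mk_comp[OF H])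
    show "mk e G M N \<Phi> (vshift (2 * e) x) * mk e G N M \<Psi> x = pmap N x (vshift (2 * (2 * e)) x)" by (rule mk_comp[OF H'])
  next
    fix x y :: "real^'a" assume "x \<le> y"
    then show "mk e G M N \<Phi> y * pmap M x y = pmap N (vshift (2 * e) x) (vshift (2 * e) y) * mk e G M N \<Phi> x"
      "mk e G N M \<Psi> y * pmap N x y = pmap M (vshift (2 * e) x) (vshift (2 * e) y) * mk e G N M \<Psi> x"
      using mk_nat[OF H] mk_nat[OF H'] by auto
  qed
qed

lemma cube_borel:
  fixes A :: "(real^'n::finite) set"
  assumes "is_cube A"
  shows "A \<in> sets borel"
proof -
  obtain I where I: "\<forall>i. is_interval (I i)" "A = {x. \<forall>i. x $ i \<in> I i}"
    using assms unfolding is_cube_def by blast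
  have m: "(\<lambda>x::real^'n. x $ i) \<in> borel_measurable borel" for i
    by (intro borel_measurable_continuous_onI continuous_intros)
  have "(\<lambda>x::real^'n. x $ i) -` I i \<inter> space borel \<in> sets borel" for i
    using measurable_sets[OF m real_interval_borel_measurable[OF I(1)[rule_format, of i]]] .
  then have s: "{x::real^'n. x $ i \<in> I i} \<in> sets borel" for i by (simp add: vimage_def)
  have "A = (\<Inter>i\<in>UNIV. {x::real^'n. x $ i \<in> I i})" using I(2) by auto
  also have "\<dots> \<in> sets borel" by (rule sets.finite_INT) (auto simp: s)
  finally show ?thesis .
qed

lemma cube_Int:
  fixes A :: "(real^'n::finite) set"
  assumes "is_cube A" "is_cube B"
  shows "is_cube (A \<inter> B)"
proof -
  obtain I where I: "\<forall>i. is_interval (I i)" "A = {x. \<forall>i. x $ i \<in> I i}"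
    using assms(1) unfolding is_cube_def by blast
  obtain J where J: "\<forall>i. is_interval (J i)" "B = {x. \<forall>i. x $ i \<in> J i}"
    using assms(2) unfolding is_cube_def by blast
  show ?thesis unfolding is_cube_def
    by (rule exI[of _ "\<lambda>i. I i \<inter> J i"]) (use I J in \<open>auto intro: is_interval_Int\<close>)
qed

lemma cube_min:
  fixes A :: "(real^'n::finite) set"
  assumes "is_cube A" "x \<in> A" "y \<in> A"
  shows "(\<chi> i. min (x $ i) (y $ i)) \<in> A"
proof -
  obtain I where I: "\<forall>i. is_interval (I i)" "A = {x. \<forall>i. x $ i \<in> I i}"
    using assms(1) unfolding is_cube_def by blast
  have "min (x $ i) (y $ i) \<in> I i" for i
    using assms(2,3) I by (cases "x $ i \<le> y $ i") (auto simp: min_def)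
  then show ?thesis using I by auto
qed

lemma piecewise_const_measurable:
  fixes f :: "(real^'n::finite) \<Rightarrow> nat"
  assumes fin: "finite Qs" and bor: "\<forall>Q\<in>Qs. Q \<in> sets borel" and cov: "\<Union>Qs = UNIV"
    and const: "\<forall>Q\<in>Qs. \<forall>x\<in>Q. \<forall>y\<in>Q. f x = f y"
  shows "(\<lambda>x. ennreal (real (f x))) \<in> borel_measurable lborel"
proof -
  have pre: "f -` {a} = \<Union>{Q\<in>Qs. \<exists>x\<in>Q. f x = a}" for a
  proof (rule Set.set_eqI, rule iffI)
    fix x assume "x \<in> f -` {a}"
    moreover obtain Q where "Q \<in> Qs" "x \<in> Q" using cov by blast
    ultimately show "x \<in> \<Union>{Q\<in>Qs. \<exists>x\<in>Q. f x = a}" by blast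
  next
    fix x assume "x \<in> \<Union>{Q\<in>Qs. \<exists>x\<in>Q. f x = a}"
    then obtain Q z where q: "x \<in> Q" "Q \<in> Qs" "z \<in> Q" "f z = a" by blast
    then have "f x = f z" using const by blast
    then show "x \<in> f -` {a}" using q by simp
  qed
  have "f \<in> borel \<rightarrow>\<^sub>M count_space UNIV"
    unfolding measurable_count_space_eq2_countable
  proof safe
    fix a
    have "\<Union>{Q\<in>Qs. \<exists>x\<in>Q. f x = a} \<in> sets borel"
      by (rule sets.finite_Union) (use fin bor in auto)
    then show "f -` {a} \<inter> space borel \<in> sets borel" using pre by simp
  qed simp
  moreover have "(\<lambda>k. ennreal (real k)) \<in> count_space UNIV \<rightarrow>\<^sub>M borel"
    by (simp add: measurable_count_space_eq1)
  ultimately have "(\<lambda>x. ennreal (real (f x))) \<in> borel \<rightarrow>\<^sub>M borel"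
    by (rule measurable_compose)
  then show ?thesis by (subst measurable_cong_sets[OF sets_lborel refl])
qed

lemma ce_local:
  fixes M :: "('k::field, 'n::finite) pmod"
  assumes CE: "cubically_encoded M"
  shows "\<exists>(P::nat set) e Cs. finite P \<and> (\<forall>x. e x \<in> P) \<and>
    (\<forall>p\<in>P. finite (Cs p) \<and> (\<forall>A\<in>Cs p. is_cube A) \<and> {x. e x = p} = \<Union>(Cs p)) \<and>
    (\<forall>x y. e x = e y \<longrightarrow> pdim M x = pdim M y) \<and>
    (\<forall>x y. x \<le> y \<longrightarrow> e x = e y \<longrightarrow> (\<exists>Q\<in>carrier_mat (pdim M x) (pdim M y).
        pmap M x y * Q = 1\<^sub>m (pdim M y) \<and> Q * pmap M x y = 1\<^sub>m (pdim M x)))"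
proof -
  from CE show ?thesis unfolding cubically_encoded_def
  proof (elim conjE exE, goal_cases)
    case (1 P le e d G \<eta> \<theta>)
  have pm: "is_pmod M" and fP: "finite P" and eP: "\<forall>x. e x \<in> P" and
    fib: "\<forall>p\<in>P. finite_union_of_cubes {x. e x = p}" and
    Gid: "\<forall>p\<in>P. G p p = 1\<^sub>m (d p)" and
    iso: "\<forall>x. \<eta> x \<in> carrier_mat (d (e x)) (pdim M x) \<and> \<theta> x \<in> carrier_mat (pdim M x) (d (e x)) \<and>
           \<theta> x * \<eta> x = 1\<^sub>m (pdim M x) \<and> \<eta> x * \<theta> x = 1\<^sub>m (d (e x))" and
    nat: "\<forall>x y. x \<le> y \<longrightarrow> \<eta> y * pmap M x y = G (e x) (e y) * \<eta> x"
    using 1 by blast+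
  from fib obtain Cs where Cs: "\<forall>p\<in>P. finite (Cs p) \<and> (\<forall>A\<in>Cs p. is_cube A) \<and> {x. e x = p} = \<Union>(Cs p)"
    unfolding finite_union_of_cubes_def by metis
  have dimd: "pdim M x = d (e x)" for x
    using dims_eq_of_inverse[of "\<theta> x" "pdim M x" "d (e x)" "\<eta> x"] iso by blast
  have loc: "\<exists>Q\<in>carrier_mat (pdim M x) (pdim M y).
        pmap M x y * Q = 1\<^sub>m (pdim M y) \<and> Q * pmap M x y = 1\<^sub>m (pdim M x)"
    if xy: "x \<le> y" and exy: "e x = e y" for x y
  proof -
    define p where "p = e x"
    have ey: "e y = p" using exy p_def by simp
    have ix: "\<eta> x \<in> carrier_mat (d p) (pdim M x)" "\<theta> x \<in> carrier_mat (pdim M x) (d p)"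
       "\<theta> x * \<eta> x = 1\<^sub>m (pdim M x)" "\<eta> x * \<theta> x = 1\<^sub>m (d p)"
      using iso p_def by auto
    have iy: "\<eta> y \<in> carrier_mat (d p) (pdim M y)" "\<theta> y \<in> carrier_mat (pdim M y) (d p)"
       "\<theta> y * \<eta> y = 1\<^sub>m (pdim M y)" "\<eta> y * \<theta> y = 1\<^sub>m (d p)"
      using iso ey by (metis)+
    have cM: "pmap M x y \<in> carrier_mat (pdim M y) (pdim M x)" by (rule pmod_carrier[OF pm xy])
    have n: "\<eta> y * pmap M x y = \<eta> x"
      using nat xy Gid eP ix(1) p_def ey by auto
    have pm_eq: "pmap M x y = \<theta> y * \<eta> x"
    proof -
      have "pmap M x y = (\<theta> y * \<eta> y) * pmap M x y" using iy(3) cM by simp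
      also have "\<dots> = \<theta> y * (\<eta> y * pmap M x y)" by (rule assoc_mult_mat[OF iy(2) iy(1) cM])
      finally show ?thesis using n by simp
    qed
    define Q where "Q = \<theta> x * \<eta> y"
    have cQ: "Q \<in> carrier_mat (pdim M x) (pdim M y)" unfolding Q_def using ix iy by auto
    have 1: "pmap M x y * Q = 1\<^sub>m (pdim M y)"
    proof -
      have "pmap M x y * Q = \<theta> y * (\<eta> x * \<theta> x) * \<eta> y"
        unfolding pm_eq Q_def by (rule assoc4_1[OF iy(2) ix(1) ix(2) iy(1), symmetric])
      also have "\<dots> = \<theta> y * \<eta> y" using ix(4) iy(2) by simp
      finally show ?thesis using iy(3) by simp
    qed
    have 2: "Q * pmap M x y = 1\<^sub>m (pdim M x)"
    proof -
      have "Q * pmap M x y = \<theta> x * (\<eta> y * \<theta> y) * \<eta> x"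
        unfolding pm_eq Q_def by (rule assoc4_1[OF ix(2) iy(1) iy(2) ix(1), symmetric])
      also have "\<dots> = \<theta> x * \<eta> x" using iy(4) ix(2) by simp
      finally show ?thesis using ix(3) by simp
    qed
    show ?thesis using cQ 1 2 by blast
  qed
  show ?thesis
    by (rule exI[of _ P], rule exI[of _ e], rule exI[of _ Cs]) (use fP eP Cs dimd loc in auto)
  qed
qed


lemma two_fiber_measurable:
  fixes f :: "(real^'n::finite) \<Rightarrow> nat" and e1 e2 :: "real^'n \<Rightarrow> nat"
  assumes fP1: "finite P1" and eP1: "\<forall>x. e1 x \<in> P1"
    and C1: "\<forall>p\<in>P1. finite (Cs1 p) \<and> (\<forall>A\<in>Cs1 p. is_cube A) \<and> {x. e1 x = p} = \<Union>(Cs1 p)"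
    and fP2: "finite P2" and eP2: "\<forall>x. e2 x \<in> P2"
    and C2: "\<forall>p\<in>P2. finite (Cs2 p) \<and> (\<forall>A\<in>Cs2 p. is_cube A) \<and> {x. e2 x = p} = \<Union>(Cs2 p)"
    and mono: "\<forall>x y. x \<le> y \<longrightarrow> e1 x = e1 y \<longrightarrow> e2 x = e2 y \<longrightarrow> f x = f y"
  shows "(\<lambda>x. ennreal (real (f x))) \<in> borel_measurable lborel"
proof -
  define Qs where "Qs = (\<lambda>(A, B). A \<inter> B) ` ((\<Union>p\<in>P1. Cs1 p) \<times> (\<Union>q\<in>P2. Cs2 q))"
  have C1p': "finite (Cs1 p) \<and> (\<forall>A\<in>Cs1 p. is_cube A) \<and> {x. e1 x = p} = \<Union>(Cs1 p)" if "p \<in> P1" for p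
    using C1 that by (rule bspec)
  have C1p1: "finite (Cs1 p)" if "p \<in> P1" for p using conjunct1[OF C1p'[OF that]] .
  have C1p2: "is_cube A" if "p \<in> P1" "A \<in> Cs1 p" for p A
    using conjunct1[OF conjunct2[OF C1p'[OF that(1)]]] that(2) by (rule bspec)
  have C1p3: "{x. e1 x = p} = \<Union>(Cs1 p)" if "p \<in> P1" for p
    using conjunct2[OF conjunct2[OF C1p'[OF that]]] .
  note C1p = C1p1 C1p2 C1p3
  have C2p': "finite (Cs2 p) \<and> (\<forall>A\<in>Cs2 p. is_cube A) \<and> {x. e2 x = p} = \<Union>(Cs2 p)" if "p \<in> P2" for p
    using C2 that by (rule bspec)
  have C2p1: "finite (Cs2 p)" if "p \<in> P2" for p using conjunct1[OF C2p'[OF that]] .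
  have C2p2: "is_cube A" if "p \<in> P2" "A \<in> Cs2 p" for p A
    using conjunct1[OF conjunct2[OF C2p'[OF that(1)]]] that(2) by (rule bspec)
  have C2p3: "{x. e2 x = p} = \<Union>(Cs2 p)" if "p \<in> P2" for p
    using conjunct2[OF conjunct2[OF C2p'[OF that]]] .
  note C2p = C2p1 C2p2 C2p3
  have f1: "finite (\<Union>p\<in>P1. Cs1 p)" by (rule finite_UN_I[OF fP1 C1p(1)])
  have f2: "finite (\<Union>p\<in>P2. Cs2 p)" by (rule finite_UN_I[OF fP2 C2p(1)])
  have fin: "finite Qs" unfolding Qs_def
    by (rule finite_imageI[OF finite_cartesian_product[OF f1 f2]])
  have QsE: "\<exists>A B p q. Q = A \<inter> B \<and> p \<in> P1 \<and> A \<in> Cs1 p \<and> q \<in> P2 \<and> B \<in> Cs2 q" if "Q \<in> Qs" for Q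
  proof -
    from that obtain AB where AB: "AB \<in> (\<Union>p\<in>P1. Cs1 p) \<times> (\<Union>q\<in>P2. Cs2 q)" "Q = (\<lambda>(A, B). A \<inter> B) AB"
      unfolding Qs_def by (rule imageE)
    obtain A B where ab: "AB = (A, B)" by (cases AB)
    have A: "A \<in> (\<Union>p\<in>P1. Cs1 p)" and B: "B \<in> (\<Union>q\<in>P2. Cs2 q)" and Q: "Q = A \<inter> B"
      using AB ab by auto
    from A obtain p where "p \<in> P1" "A \<in> Cs1 p" by (rule UN_E)
    moreover from B obtain q where "q \<in> P2" "B \<in> Cs2 q" by (rule UN_E)
    ultimately show ?thesis using Q by blast
  qed
  have cube: "is_cube Q" if Qin: "Q \<in> Qs" for Q
  proof -
    obtain A B p q where "Q = A \<inter> B" "p \<in> P1" "A \<in> Cs1 p" "q \<in> P2" "B \<in> Cs2 q"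
      using QsE[OF Qin] by blast
    then show ?thesis using C1p2 C2p2 cube_Int by metis
  qed
  have bor: "\<forall>Q\<in>Qs. Q \<in> sets borel" using cube cube_borel by blast
  have cov: "\<Union>Qs = UNIV"
  proof -
    have "x \<in> \<Union>Qs" for x
    proof -
      have "x \<in> \<Union>(Cs1 (e1 x))" using C1p3[OF eP1[rule_format, of x]] by (metis mem_Collect_eq)
      then obtain A where A: "A \<in> Cs1 (e1 x)" "x \<in> A" by (rule UnionE)
      have "x \<in> \<Union>(Cs2 (e2 x))" using C2p3[OF eP2[rule_format, of x]] by (metis mem_Collect_eq)
      then obtain B where B: "B \<in> Cs2 (e2 x)" "x \<in> B" by (rule UnionE)
      have "A \<in> (\<Union>p\<in>P1. Cs1 p)" by (rule UN_I[where B=Cs1, OF eP1[rule_format, of x] A(1)])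
      moreover have "B \<in> (\<Union>p\<in>P2. Cs2 p)" by (rule UN_I[where B=Cs2, OF eP2[rule_format, of x] B(1)])
      ultimately have "(A, B) \<in> (\<Union>p\<in>P1. Cs1 p) \<times> (\<Union>q\<in>P2. Cs2 q)" by (rule SigmaI)
      then have "(\<lambda>(A, B). A \<inter> B) (A, B) \<in> Qs" unfolding Qs_def by (rule imageI)
      then have "A \<inter> B \<in> Qs" by simp
      moreover have "x \<in> A \<inter> B" using A B by simp
      ultimately show ?thesis by (rule UnionI)
    qed
    then show ?thesis by blast
  qed
  have const: "\<forall>Q\<in>Qs. \<forall>x\<in>Q. \<forall>y\<in>Q. f x = f y"
  proof (intro ballI)
    fix Q x y assume Q: "Q \<in> Qs" and x: "x \<in> Q" and y: "y \<in> Q"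
    obtain A B p q where AB: "Q = A \<inter> B" "p \<in> P1" "A \<in> Cs1 p" "q \<in> P2" "B \<in> Cs2 q"
      using QsE[OF Q] by blast
    have cA: "is_cube A" and cB: "is_cube B" using AB C1p2 C2p2 by auto
    have Ap: "e1 z = p" if "z \<in> A" for z
    proof -
      have "z \<in> \<Union>(Cs1 p)" using that AB(3) by (rule UnionI[rotated])
      then have "z \<in> {x. e1 x = p}" using C1p3[OF AB(2)] by simp
      then show ?thesis by simp
    qed
    have Bq: "e2 z = q" if "z \<in> B" for z
    proof -
      have "z \<in> \<Union>(Cs2 q)" using that AB(5) by (rule UnionI[rotated])
      then have "z \<in> {x. e2 x = q}" using C2p3[OF AB(4)] by simp
      then show ?thesis by simp
    qed
    define z where "z = (\<chi> i. min (x $ i) (y $ i))"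
    have zA: "z \<in> A" unfolding z_def using cube_min[OF cA] x y AB(1) by blast
    have zB: "z \<in> B" unfolding z_def using cube_min[OF cB] x y AB(1) by blast
    have zx: "z \<le> x" and zy: "z \<le> y" unfolding z_def by (auto simp: Finite_Cartesian_Product.less_eq_vec_def)
    have xA: "x \<in> A" "x \<in> B" "y \<in> A" "y \<in> B" using x y AB(1) by auto
    have "f z = f x" using mono zx Ap[OF zA] Ap[OF xA(1)] Bq[OF zB] Bq[OF xA(2)] by simp
    moreover have "f z = f y" using mono zy Ap[OF zA] Ap[OF xA(3)] Bq[OF zB] Bq[OF xA(4)] by simp
    ultimately show "f x = f y" by simp
  qed
  show ?thesis by (rule piecewise_const_measurable[OF fin bor cov const])
qed

lemma arrow_measurable:
  fixes C X :: "('k::field, 'n::finite) pmod"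
  assumes CC: "cubically_encoded C" and CX: "cubically_encoded X" and g: "is_pmor C X g"
  shows "(\<lambda>y. ennreal (real (ker_dim C X g y))) \<in> borel_measurable lborel"
    "(\<lambda>y. ennreal (real (coker_dim C X g y))) \<in> borel_measurable lborel"
proof -
  have pmC: "is_pmod C" and pmX: "is_pmod X" using CC CX unfolding cubically_encoded_def by auto
  obtain P1 :: "nat set" and e1 :: "real^'n \<Rightarrow> nat" and Cs1 :: "nat \<Rightarrow> (real^'n) set set" where L1: "finite P1" "\<forall>x. e1 x \<in> P1"
    "\<forall>p\<in>P1. finite (Cs1 p) \<and> (\<forall>A\<in>Cs1 p. is_cube A) \<and> {x. e1 x = p} = \<Union>(Cs1 p)"
    "\<forall>x y. e1 x = e1 y \<longrightarrow> pdim C x = pdim C y"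
    "\<forall>x y. x \<le> y \<longrightarrow> e1 x = e1 y \<longrightarrow> (\<exists>Q\<in>carrier_mat (pdim C x) (pdim C y).
        pmap C x y * Q = 1\<^sub>m (pdim C y) \<and> Q * pmap C x y = 1\<^sub>m (pdim C x))"
    using ce_local[OF CC] by blast
  obtain P2 :: "nat set" and e2 :: "real^'n \<Rightarrow> nat" and Cs2 :: "nat \<Rightarrow> (real^'n) set set" where L2: "finite P2" "\<forall>x. e2 x \<in> P2"
    "\<forall>p\<in>P2. finite (Cs2 p) \<and> (\<forall>A\<in>Cs2 p. is_cube A) \<and> {x. e2 x = p} = \<Union>(Cs2 p)"
    "\<forall>x y. e2 x = e2 y \<longrightarrow> pdim X x = pdim X y"
    "\<forall>x y. x \<le> y \<longrightarrow> e2 x = e2 y \<longrightarrow> (\<exists>Q\<in>carrier_mat (pdim X x) (pdim X y).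
        pmap X x y * Q = 1\<^sub>m (pdim X y) \<and> Q * pmap X x y = 1\<^sub>m (pdim X x))"
    using ce_local[OF CX] by blast
  have rk: "vec_space.rank (pdim X y) (g y) = vec_space.rank (pdim X x) (g x)"
    if xy: "x \<le> y" and e1: "e1 x = e1 y" and e2: "e2 x = e2 y" for x y
  proof -
    obtain Q1 where Q1: "Q1 \<in> carrier_mat (pdim C x) (pdim C y)" "pmap C x y * Q1 = 1\<^sub>m (pdim C y)"
      using L1(5) xy e1 by blast
    obtain Q2 where Q2: "Q2 \<in> carrier_mat (pdim X x) (pdim X y)" "Q2 * pmap X x y = 1\<^sub>m (pdim X x)"
      using L2(5) xy e2 by blast
    have gx: "g x \<in> carrier_mat (pdim X x) (pdim C x)" and gy: "g y \<in> carrier_mat (pdim X y) (pdim C y)"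
      using g unfolding is_pmor_def by auto
    have n: "g y * pmap C x y = pmap X x y * g x" using g xy unfolding is_pmor_def by auto
    have "vec_space.rank (pdim X y) (g y) = vec_space.rank (pdim X y) (g y * pmap C x y)"
      by (rule rank_right_inv[OF pmod_carrier[OF pmC xy] Q1(1) Q1(2) gy, symmetric])
    also have "\<dots> = vec_space.rank (pdim X y) (pmap X x y * g x)" by (simp add: n)
    also have "\<dots> = vec_space.rank (pdim X x) (g x)"
      by (rule rank_left_inv[OF pmod_carrier[OF pmX xy] Q2(1) Q2(2) gx])
    finally show ?thesis .
  qed
  have kmono: "\<forall>x y. x \<le> y \<longrightarrow> e1 x = e1 y \<longrightarrow> e2 x = e2 y \<longrightarrow> ker_dim C X g x = ker_dim C X g y"
  proof (intro allI impI)
    fix x y assume a: "x \<le> y" "e1 x = e1 y" "e2 x = e2 y"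
    have "pdim C x = pdim C y" using L1(4) a(2) by blast
    then show "ker_dim C X g x = ker_dim C X g y" unfolding ker_dim_def using rk[OF a] by simp
  qed
  have cmono: "\<forall>x y. x \<le> y \<longrightarrow> e1 x = e1 y \<longrightarrow> e2 x = e2 y \<longrightarrow> coker_dim C X g x = coker_dim C X g y"
  proof (intro allI impI)
    fix x y assume a: "x \<le> y" "e1 x = e1 y" "e2 x = e2 y"
    have "pdim X x = pdim X y" using L2(4) a(3) by blast
    then show "coker_dim C X g x = coker_dim C X g y" unfolding coker_dim_def using rk[OF a] by simp
  qed
  show "(\<lambda>y. ennreal (real (ker_dim C X g y))) \<in> borel_measurable lborel"
    by (rule two_fiber_measurable[OF L1(1-3) L2(1-3) kmono])
  show "(\<lambda>y. ennreal (real (coker_dim C X g y))) \<in> borel_measurable lborel"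
    by (rule two_fiber_measurable[OF L1(1-3) L2(1-3) cmono])
qed


lemma emeasure_box:
  fixes x :: "real^'n::finite"
  assumes e: "e \<ge> 0"
  shows "emeasure lborel (cbox x (vshift e x)) = ennreal (e ^ CARD('n))"
proof -
  have d: "vshift e x - x = (\<chi> i. e)" by (simp add: vshift_def)
  have b: "(\<chi> i. e) \<bullet> b = e" if bB: "b \<in> (Basis :: (real^'n) set)" for b
  proof -
    obtain i where "b = axis i (1::real)" using bB unfolding Basis_vec_def by auto
    then show ?thesis by (simp add: inner_axis)
  qed
  have le: "\<forall>b\<in>(Basis :: (real^'n) set). x \<bullet> b \<le> vshift e x \<bullet> b"
  proof
    fix b :: "real^'n" assume "b \<in> Basis"
    then have "(vshift e x - x) \<bullet> b = e" using b d by simp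
    then show "x \<bullet> b \<le> vshift e x \<bullet> b" using e by (simp add: inner_diff_left)
  qed
  have "emeasure lborel (cbox x (vshift e x)) = ennreal (\<Prod>b\<in>(Basis :: (real^'n) set). (vshift e x - x) \<bullet> b)"
    using le by (simp add: emeasure_lborel_cbox)
  also have "(\<Prod>b\<in>(Basis :: (real^'n) set). (vshift e x - x) \<bullet> b) = (\<Prod>b\<in>(Basis :: (real^'n) set). e)"
    using b d by (intro prod.cong) auto
  also have "\<dots> = e ^ CARD('n)" by simp
  finally show ?thesis .
qed

lemma one_le_sum4:
  assumes "(k1::nat) \<noteq> 0 \<or> k2 \<noteq> 0 \<or> k3 \<noteq> 0 \<or> k4 \<noteq> 0"
  shows "1 \<le> (ennreal (real k1) + ennreal (real k2)) + (ennreal (real k3) + ennreal (real k4))"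
proof -
  have "(ennreal (real k1) + ennreal (real k2)) + (ennreal (real k3) + ennreal (real k4))
      = ennreal (real (k1 + k2 + k3 + k4))"
    by (simp add: ennreal_plus[symmetric] add.assoc del: ennreal_plus)
  moreover have "1 \<le> real (k1 + k2 + k3 + k4)" using assms by auto
  ultimately show ?thesis by (metis ennreal_1 ennreal_leI)
qed

definition goodset :: "nat \<Rightarrow> (nat \<Rightarrow> ('k::field, 'n::finite) pmod) \<Rightarrow> (nat \<Rightarrow> ('k, 'n) pmod)
    \<Rightarrow> (nat \<Rightarrow> ('k, 'n) pmor) \<Rightarrow> (nat \<Rightarrow> ('k, 'n) pmor) \<Rightarrow> (real^'n) set" where
  "goodset m X C l r = {y. \<forall>i\<in>{1..m}. ker_dim (C i) (X (i - 1)) (l i) y = 0 \<and>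
      coker_dim (C i) (X (i - 1)) (l i) y = 0 \<and> ker_dim (C i) (X i) (r i) y = 0 \<and>
      coker_dim (C i) (X i) (r i) y = 0}"

lemma zigzag_cover:
  fixes M N :: "('k::field, 'n::finite) pmod"
  assumes Z: "is_zigzag M N m X C l r" and cost: "zigzag_cost m X C l r < ennreal (e ^ CARD('n))"
    and e: "e \<ge> 0"
  shows "\<exists>y\<in>goodset m X C l r. x \<le> y \<and> y \<le> vshift e x"
proof (rule ccontr)
  assume nex: "\<not> (\<exists>y\<in>goodset m X C l r. x \<le> y \<and> y \<le> vshift e x)"
  define B where "B = cbox x (vshift e x)"
  have Bint: "B = {x..vshift e x}" unfolding B_def by (simp add: interval_cbox_cart)
  define kl where "kl i y = ennreal (real (ker_dim (C i) (X (i - 1)) (l i) y))" for i y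
  define cl where "cl i y = ennreal (real (coker_dim (C i) (X (i - 1)) (l i) y))" for i y
  define kr where "kr i y = ennreal (real (ker_dim (C i) (X i) (r i) y))" for i y
  define cr where "cr i y = ennreal (real (coker_dim (C i) (X i) (r i) y))" for i y
  define F where "F y = (\<Sum>i\<in>{1..m}. (kl i y + cl i y) + (kr i y + cr i y))" for y
  have ce: "cubically_encoded (C i)" "cubically_encoded (X (i - 1))" "cubically_encoded (X i)"
      "is_pmor (C i) (X (i - 1)) (l i)" "is_pmor (C i) (X i) (r i)" if "i \<in> {1..m}" for i
    using Z that unfolding is_zigzag_def by auto
  have meas: "kl i \<in> borel_measurable lborel" "cl i \<in> borel_measurable lborel"
      "kr i \<in> borel_measurable lborel" "cr i \<in> borel_measurable lborel" if "i \<in> {1..m}" for i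
    unfolding kl_def cl_def kr_def cr_def
    using arrow_measurable[OF ce(1,2,4)[OF that]] arrow_measurable[OF ce(1,3,5)[OF that]] by auto
  have costF: "zigzag_cost m X C l r = integral\<^sup>N lborel F"
  proof -
    have "integral\<^sup>N lborel F = (\<Sum>i\<in>{1..m}. integral\<^sup>N lborel (\<lambda>y. (kl i y + cl i y) + (kr i y + cr i y)))"
      unfolding F_def by (rule nn_integral_sum) (use meas in auto)
    also have "\<dots> = (\<Sum>i\<in>{1..m}. (integral\<^sup>N lborel (kl i) + integral\<^sup>N lborel (cl i)) +
                        (integral\<^sup>N lborel (kr i) + integral\<^sup>N lborel (cr i)))"
    proof (rule sum.cong[OF refl])
      fix i assume i: "i \<in> {1..m}"
      note mi = meas[OF i]
      have "integral\<^sup>N lborel (\<lambda>y. (kl i y + cl i y) + (kr i y + cr i y)) =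
          integral\<^sup>N lborel (\<lambda>y. kl i y + cl i y) + integral\<^sup>N lborel (\<lambda>y. kr i y + cr i y)"
        by (rule nn_integral_add) (use mi in auto)
      also have "\<dots> = (integral\<^sup>N lborel (kl i) + integral\<^sup>N lborel (cl i)) +
                        (integral\<^sup>N lborel (kr i) + integral\<^sup>N lborel (cr i))"
        using nn_integral_add[OF mi(1) mi(2)] nn_integral_add[OF mi(3) mi(4)] by simp
      finally show "integral\<^sup>N lborel (\<lambda>y. (kl i y + cl i y) + (kr i y + cr i y)) =
          (integral\<^sup>N lborel (kl i) + integral\<^sup>N lborel (cl i)) +
                        (integral\<^sup>N lborel (kr i) + integral\<^sup>N lborel (cr i))" .
    qed
    also have "\<dots> = zigzag_cost m X C l r"
      unfolding zigzag_cost_def arrow_cost_def hilbert_amp_def kl_def cl_def kr_def cr_def by simp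
    finally show ?thesis by simp
  qed
  have ind: "indicator B y \<le> F y" for y
  proof (cases "y \<in> B")
    case False then show ?thesis by simp
  next
    case True
    then have "x \<le> y" "y \<le> vshift e x" unfolding Bint by auto
    then have "y \<notin> goodset m X C l r" using nex by blast
    then obtain i where i: "i \<in> {1..m}" and bad: "ker_dim (C i) (X (i - 1)) (l i) y \<noteq> 0 \<or>
      coker_dim (C i) (X (i - 1)) (l i) y \<noteq> 0 \<or> ker_dim (C i) (X i) (r i) y \<noteq> 0 \<or>
      coker_dim (C i) (X i) (r i) y \<noteq> 0"
      unfolding goodset_def by blast
    have "1 \<le> (kl i y + cl i y) + (kr i y + cr i y)"
      using one_le_sum4[OF bad] unfolding kl_def cl_def kr_def cr_def .
    also have "\<dots> \<le> F y" unfolding F_def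
      by (rule member_le_sum[OF i]) auto
    finally show ?thesis using True by simp
  qed
  have Bm: "B \<in> sets lborel" unfolding B_def by simp
  have "ennreal (e ^ CARD('n)) = emeasure lborel B" unfolding B_def by (rule emeasure_box[OF e, symmetric])
  also have "\<dots> = integral\<^sup>N lborel (indicator B)" by (rule nn_integral_indicator[OF Bm, symmetric])
  also have "\<dots> \<le> integral\<^sup>N lborel F" by (rule nn_integral_mono) (use ind in auto)
  also have "\<dots> = zigzag_cost m X C l r" by (rule costF[symmetric])
  finally show False using cost by simp
qed

definition minv :: "'a::field mat \<Rightarrow> 'a mat" where
  "minv A = (SOME B. B \<in> carrier_mat (dim_col A) (dim_row A) \<and> B * A = 1\<^sub>m (dim_col A) \<and> A * B = 1\<^sub>m (dim_row A))"

lemma minv: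
  fixes g :: "'a::field mat"
  assumes g: "g \<in> carrier_mat b a" and h: "h \<in> carrier_mat a b" "h * g = 1\<^sub>m a" "g * h = 1\<^sub>m b"
  shows "minv g \<in> carrier_mat a b" "minv g * g = 1\<^sub>m a" "g * minv g = 1\<^sub>m b"
proof -
  have "\<exists>B. B \<in> carrier_mat (dim_col g) (dim_row g) \<and> B * g = 1\<^sub>m (dim_col g) \<and> g * B = 1\<^sub>m (dim_row g)"
    using g h by auto
  from someI_ex[OF this] show "minv g \<in> carrier_mat a b" "minv g * g = 1\<^sub>m a" "g * minv g = 1\<^sub>m b"
    unfolding minv_def using g by auto
qed

lemma inv_comp:
  fixes A1 :: "'a::field mat"
  assumes A1: "A1 \<in> carrier_mat b a" and B1: "B1 \<in> carrier_mat a b" and BA1: "B1 * A1 = 1\<^sub>m a" and AB1: "A1 * B1 = 1\<^sub>m b"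
    and A2: "A2 \<in> carrier_mat c b" and B2: "B2 \<in> carrier_mat b c" and BA2: "B2 * A2 = 1\<^sub>m b" and AB2: "A2 * B2 = 1\<^sub>m c"
  shows "A2 * A1 \<in> carrier_mat c a" "B1 * B2 \<in> carrier_mat a c"
    "(B1 * B2) * (A2 * A1) = 1\<^sub>m a" "(A2 * A1) * (B1 * B2) = 1\<^sub>m c"
proof -
  show "A2 * A1 \<in> carrier_mat c a" "B1 * B2 \<in> carrier_mat a c" using A1 B1 A2 B2 by auto
  have "(B1 * B2) * (A2 * A1) = B1 * (B2 * A2) * A1" by (rule assoc4_1[OF B1 B2 A2 A1, symmetric])
  also have "\<dots> = 1\<^sub>m a" using BA2 BA1 B1 by simp
  finally show "(B1 * B2) * (A2 * A1) = 1\<^sub>m a" .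
  have "(A2 * A1) * (B1 * B2) = A2 * (A1 * B1) * B2" by (rule assoc4_1[OF A2 A1 B1 B2, symmetric])
  also have "\<dots> = 1\<^sub>m c" using AB1 AB2 A2 by simp
  finally show "(A2 * A1) * (B1 * B2) = 1\<^sub>m c" .
qed

lemma inv_nat:
  fixes A1 :: "'a::field mat"
  assumes A1: "A1 \<in> carrier_mat p1 q1" and B1: "B1 \<in> carrier_mat q1 p1" and AB1: "A1 * B1 = 1\<^sub>m p1"
    and A2: "A2 \<in> carrier_mat p2 q2" and B2: "B2 \<in> carrier_mat q2 p2" and BA2: "B2 * A2 = 1\<^sub>m q2"
    and P: "P \<in> carrier_mat q2 q1" and Q: "Q \<in> carrier_mat p2 p1" and n: "A2 * P = Q * A1"
  shows "B2 * Q = P * B1"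
proof -
  have "B2 * Q = B2 * (Q * (A1 * B1))" using AB1 Q by simp
  also have "\<dots> = B2 * ((Q * A1) * B1)" by (simp add: assoc_mult_mat[OF Q A1 B1])
  also have "\<dots> = B2 * (Q * A1) * B1" by (rule assoc_mult_mat[OF B2 mult_carrier_mat[OF Q A1] B1, symmetric])
  also have "\<dots> = B2 * (A2 * P) * B1" by (simp add: n)
  also have "\<dots> = (B2 * A2) * (P * B1)" by (rule assoc4_1[OF B2 A2 P B1])
  also have "\<dots> = P * B1" using BA2 P B1 by simp
  finally show ?thesis .
qed

primrec zphi :: "(nat \<Rightarrow> ('k::field, 'n::finite) pmod) \<Rightarrow> (nat \<Rightarrow> ('k, 'n) pmor) \<Rightarrow> (nat \<Rightarrow> ('k, 'n) pmor)
    \<Rightarrow> nat \<Rightarrow> real^'n \<Rightarrow> 'k mat" where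
  "zphi X l r 0 y = 1\<^sub>m (pdim (X 0) y)"
| "zphi X l r (Suc k) y = r (Suc k) y * minv (l (Suc k) y) * zphi X l r k y"

primrec zpsi :: "(nat \<Rightarrow> ('k::field, 'n::finite) pmod) \<Rightarrow> (nat \<Rightarrow> ('k, 'n) pmor) \<Rightarrow> (nat \<Rightarrow> ('k, 'n) pmor)
    \<Rightarrow> nat \<Rightarrow> real^'n \<Rightarrow> 'k mat" where
  "zpsi X l r 0 y = 1\<^sub>m (pdim (X 0) y)"
| "zpsi X l r (Suc k) y = zpsi X l r k y * (l (Suc k) y * minv (r (Suc k) y))"

lemma good_arrow_inv:
  fixes A B :: "('k::field, 'n::finite) pmod"
  assumes g: "is_pmor A B h" and k: "ker_dim A B h y = 0" and c: "coker_dim A B h y = 0"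
  shows "pdim A y = pdim B y \<and> minv (h y) \<in> carrier_mat (pdim A y) (pdim B y) \<and>
     minv (h y) * h y = 1\<^sub>m (pdim A y) \<and> h y * minv (h y) = 1\<^sub>m (pdim B y)"
proof -
  have hy: "h y \<in> carrier_mat (pdim B y) (pdim A y)" using g unfolding is_pmor_def by auto
  have "pdim A y \<le> vec_space.rank (pdim B y) (h y)" using k unfolding ker_dim_def by simp
  moreover have "pdim B y \<le> vec_space.rank (pdim B y) (h y)" using c unfolding coker_dim_def by simp
  ultimately obtain hh where "pdim A y = pdim B y" "hh \<in> carrier_mat (pdim A y) (pdim B y)"
     "hh * h y = 1\<^sub>m (pdim A y)" "h y * hh = 1\<^sub>m (pdim B y)"
    using full_rank_inverse[OF hy] by blast
  then show ?thesis using minv[OF hy] by blast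
qed

lemma zigzag_arrow:
  assumes Z: "is_zigzag M N m X C l r" and i: "i \<in> {1..m}"
  shows "is_pmod (C i)" "is_pmod (X (i - 1))" "is_pmod (X i)"
    "is_pmor (C i) (X (i - 1)) (l i)" "is_pmor (C i) (X i) (r i)"
  using Z i unfolding is_zigzag_def cubically_encoded_def by auto

lemma zphi_inv:
  assumes Z: "is_zigzag M N m X C l r" and y: "y \<in> goodset m X C l r"
  shows "k \<le> m \<Longrightarrow> zphi X l r k y \<in> carrier_mat (pdim (X k) y) (pdim (X 0) y) \<and>
     zpsi X l r k y \<in> carrier_mat (pdim (X 0) y) (pdim (X k) y) \<and>
     zpsi X l r k y * zphi X l r k y = 1\<^sub>m (pdim (X 0) y) \<and>
     zphi X l r k y * zpsi X l r k y = 1\<^sub>m (pdim (X k) y)"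
proof (induction k)
  case 0
  then show ?case by simp
next
  case (Suc k)
  have i: "Suc k \<in> {1..m}" using Suc.prems by simp
  note ar = zigzag_arrow[OF Z i]
  have gd: "ker_dim (C (Suc k)) (X k) (l (Suc k)) y = 0" "coker_dim (C (Suc k)) (X k) (l (Suc k)) y = 0"
      "ker_dim (C (Suc k)) (X (Suc k)) (r (Suc k)) y = 0" "coker_dim (C (Suc k)) (X (Suc k)) (r (Suc k)) y = 0"
  proof -
    have "\<forall>i\<in>{1..m}. ker_dim (C i) (X (i - 1)) (l i) y = 0 \<and>
      coker_dim (C i) (X (i - 1)) (l i) y = 0 \<and> ker_dim (C i) (X i) (r i) y = 0 \<and>
      coker_dim (C i) (X i) (r i) y = 0" using y unfolding goodset_def by simp
    from bspec[OF this i] show "ker_dim (C (Suc k)) (X k) (l (Suc k)) y = 0" "coker_dim (C (Suc k)) (X k) (l (Suc k)) y = 0"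
      "ker_dim (C (Suc k)) (X (Suc k)) (r (Suc k)) y = 0" "coker_dim (C (Suc k)) (X (Suc k)) (r (Suc k)) y = 0"
      by simp_all
  qed
  have lp: "is_pmor (C (Suc k)) (X k) (l (Suc k))" using ar(4) by simp
  have rp: "is_pmor (C (Suc k)) (X (Suc k)) (r (Suc k))" using ar(5) .
  note gl = good_arrow_inv[OF lp gd(1,2)]
  note gr = good_arrow_inv[OF rp gd(3,4)]
  have L: "l (Suc k) y \<in> carrier_mat (pdim (X k) y) (pdim (C (Suc k)) y)" using lp unfolding is_pmor_def by auto
  have R: "r (Suc k) y \<in> carrier_mat (pdim (X (Suc k)) y) (pdim (C (Suc k)) y)" using rp unfolding is_pmor_def by auto
  note c1 = inv_comp[of "minv (l (Suc k) y)" "pdim (C (Suc k)) y" "pdim (X k) y" "l (Suc k) y"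
      "r (Suc k) y" "pdim (X (Suc k)) y" "minv (r (Suc k) y)"]
  have c1': "r (Suc k) y * minv (l (Suc k) y) \<in> carrier_mat (pdim (X (Suc k)) y) (pdim (X k) y)"
      "l (Suc k) y * minv (r (Suc k) y) \<in> carrier_mat (pdim (X k) y) (pdim (X (Suc k)) y)"
      "(l (Suc k) y * minv (r (Suc k) y)) * (r (Suc k) y * minv (l (Suc k) y)) = 1\<^sub>m (pdim (X k) y)"
      "(r (Suc k) y * minv (l (Suc k) y)) * (l (Suc k) y * minv (r (Suc k) y)) = 1\<^sub>m (pdim (X (Suc k)) y)"
    using c1 gl gr L R by auto
  have IH: "zphi X l r k y \<in> carrier_mat (pdim (X k) y) (pdim (X 0) y)"
     "zpsi X l r k y \<in> carrier_mat (pdim (X 0) y) (pdim (X k) y)"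
     "zpsi X l r k y * zphi X l r k y = 1\<^sub>m (pdim (X 0) y)"
     "zphi X l r k y * zpsi X l r k y = 1\<^sub>m (pdim (X k) y)" using Suc by auto
  note c2 = inv_comp[OF IH c1']
  show ?case using c2 by simp
qed

lemma zphi_nat:
  assumes Z: "is_zigzag M N m X C l r" and y: "y \<in> goodset m X C l r" and y': "y' \<in> goodset m X C l r"
    and yy: "y \<le> y'"
  shows "k \<le> m \<Longrightarrow> zphi X l r k y' * pmap (X 0) y y' = pmap (X k) y y' * zphi X l r k y"
proof (induction k)
  case 0
  have "is_pmod (X 0)" using Z unfolding is_zigzag_def cubically_encoded_def by auto
  then show ?case using pmod_carrier[of "X 0" y y'] yy by simp
next
  case (Suc k)
  have i: "Suc k \<in> {1..m}" using Suc.prems by simp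
  note ar = zigzag_arrow[OF Z i]
  have pX0: "is_pmod (X 0)" and pXk: "is_pmod (X k)" using Z Suc.prems unfolding is_zigzag_def cubically_encoded_def by auto
  have pXi: "is_pmod (X (Suc k))" and pC: "is_pmod (C (Suc k))" using ar by auto
  have lp: "is_pmor (C (Suc k)) (X k) (l (Suc k))" using ar(4) by simp
  have rp: "is_pmor (C (Suc k)) (X (Suc k)) (r (Suc k))" using ar(5) .
  have gd: "ker_dim (C (Suc k)) (X k) (l (Suc k)) z = 0" "coker_dim (C (Suc k)) (X k) (l (Suc k)) z = 0"
    if "z \<in> goodset m X C l r" for z
  proof -
    have "\<forall>i\<in>{1..m}. ker_dim (C i) (X (i - 1)) (l i) z = 0 \<and>
      coker_dim (C i) (X (i - 1)) (l i) z = 0 \<and> ker_dim (C i) (X i) (r i) z = 0 \<and>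
      coker_dim (C i) (X i) (r i) z = 0" using that unfolding goodset_def by simp
    from bspec[OF this i] show "ker_dim (C (Suc k)) (X k) (l (Suc k)) z = 0" "coker_dim (C (Suc k)) (X k) (l (Suc k)) z = 0"
      by simp_all
  qed
  note gl = good_arrow_inv[OF lp gd[OF y]]
  note gl' = good_arrow_inv[OF lp gd[OF y']]
  define L where "L = l (Suc k) y"
  define L' where "L' = l (Suc k) y'"
  define R where "R = r (Suc k) y"
  define R' where "R' = r (Suc k) y'"
  define Li where "Li = minv L"
  define Li' where "Li' = minv L'"
  define P where "P = zphi X l r k y"
  define P' where "P' = zphi X l r k y'"
  have cL: "L \<in> carrier_mat (pdim (X k) y) (pdim (C (Suc k)) y)" using lp unfolding is_pmor_def L_def by auto
  have cL': "L' \<in> carrier_mat (pdim (X k) y') (pdim (C (Suc k)) y')" using lp unfolding is_pmor_def L'_def by auto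
  have cR: "R \<in> carrier_mat (pdim (X (Suc k)) y) (pdim (C (Suc k)) y)" using rp unfolding is_pmor_def R_def by auto
  have cR': "R' \<in> carrier_mat (pdim (X (Suc k)) y') (pdim (C (Suc k)) y')" using rp unfolding is_pmor_def R'_def by auto
  have cLi: "Li \<in> carrier_mat (pdim (C (Suc k)) y) (pdim (X k) y)" "L * Li = 1\<^sub>m (pdim (X k) y)"
    using gl unfolding Li_def L_def by auto
  have cLi': "Li' \<in> carrier_mat (pdim (C (Suc k)) y') (pdim (X k) y')" "Li' * L' = 1\<^sub>m (pdim (C (Suc k)) y')"
    using gl' unfolding Li'_def L'_def by auto
  have cP: "P \<in> carrier_mat (pdim (X k) y) (pdim (X 0) y)" using zphi_inv[OF Z y, of k] Suc.prems unfolding P_def by auto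
  have cP': "P' \<in> carrier_mat (pdim (X k) y') (pdim (X 0) y')" using zphi_inv[OF Z y', of k] Suc.prems unfolding P'_def by auto
  have cM: "pmap (X 0) y y' \<in> carrier_mat (pdim (X 0) y') (pdim (X 0) y)" using pmod_carrier[OF pX0 yy] .
  have cXk: "pmap (X k) y y' \<in> carrier_mat (pdim (X k) y') (pdim (X k) y)" using pmod_carrier[OF pXk yy] .
  have cXi: "pmap (X (Suc k)) y y' \<in> carrier_mat (pdim (X (Suc k)) y') (pdim (X (Suc k)) y)" using pmod_carrier[OF pXi yy] .
  have cC: "pmap (C (Suc k)) y y' \<in> carrier_mat (pdim (C (Suc k)) y') (pdim (C (Suc k)) y)" using pmod_carrier[OF pC yy] .
  have nl: "L' * pmap (C (Suc k)) y y' = pmap (X k) y y' * L" using lp yy unfolding is_pmor_def L_def L'_def by auto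
  have nr: "R' * pmap (C (Suc k)) y y' = pmap (X (Suc k)) y y' * R" using rp yy unfolding is_pmor_def R_def R'_def by auto
  have ni: "Li' * pmap (X k) y y' = pmap (C (Suc k)) y y' * Li"
    by (rule inv_nat[OF cL cLi(1) cLi(2) cL' cLi'(1) cLi'(2) cC cXk nl])
  have IH: "P' * pmap (X 0) y y' = pmap (X k) y y' * P" using Suc unfolding P_def P'_def by auto
  have "zphi X l r (Suc k) y' * pmap (X 0) y y' = R' * Li' * P' * pmap (X 0) y y'"
    unfolding R'_def Li'_def L'_def P'_def by simp
  also have "\<dots> = R' * Li' * (P' * pmap (X 0) y y')"
    by (rule assoc_mult_mat[OF mult_carrier_mat[OF cR' cLi'(1)] cP' cM])
  also have "\<dots> = R' * Li' * (pmap (X k) y y' * P)" by (simp only: IH)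
  also have "\<dots> = R' * (Li' * pmap (X k) y y') * P" by (rule assoc4_1[OF cR' cLi'(1) cXk cP, symmetric])
  also have "\<dots> = R' * (pmap (C (Suc k)) y y' * Li) * P" by (simp only: ni)
  also have "\<dots> = R' * pmap (C (Suc k)) y y' * Li * P" by (simp only: assoc_mult_mat[OF cR' cC cLi(1)])
  also have "\<dots> = pmap (X (Suc k)) y y' * R * Li * P" by (simp only: nr)
  also have "\<dots> = pmap (X (Suc k)) y y' * (R * Li * P)" by (rule assoc4_2[OF cXi cR cLi(1) cP, symmetric])
  also have "\<dots> = pmap (X (Suc k)) y y' * zphi X l r (Suc k) y"
    unfolding R_def Li_def L_def P_def by simp
  finally show ?case .
qed

lemma zigzag_interleaving:
  fixes M N :: "('k::field, 'n::finite) pmod"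
  assumes Z: "is_zigzag M N m X C l r" and cost: "zigzag_cost m X C l r < ennreal (e ^ CARD('n))"
    and e: "e \<ge> 0"
  shows "\<exists>\<phi> \<psi>. interleaving (2 * e) M N \<phi> \<psi>"
proof -
  have X0: "X 0 = M" and Xm: "X m = N" using Z unfolding is_zigzag_def by auto
  have pM: "is_pmod M" and pN: "is_pmod N"
    using Z X0 Xm unfolding is_zigzag_def cubically_encoded_def by auto
  have H: "ihyp e (goodset m X C l r) M N (zphi X l r m) (zpsi X l r m)"
    unfolding ihyp_def
  proof (intro conjI pM pN e allI ballI impI)
    fix x show "\<exists>y\<in>goodset m X C l r. x \<le> y \<and> y \<le> vshift e x" by (rule zigzag_cover[OF Z cost e])
  next
    fix y assume y: "y \<in> goodset m X C l r"
    note zi = zphi_inv[OF Z y, of m, unfolded X0 Xm, simplified]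
    show "zphi X l r m y \<in> carrier_mat (pdim N y) (pdim M y)" using zi by simp
    show "zpsi X l r m y \<in> carrier_mat (pdim M y) (pdim N y)" using zi by simp
    show "zpsi X l r m y * zphi X l r m y = 1\<^sub>m (pdim M y)" using zi by simp
    show "zphi X l r m y * zpsi X l r m y = 1\<^sub>m (pdim N y)" using zi by simp
  next
    fix y y' assume y: "y \<in> goodset m X C l r" and y': "y' \<in> goodset m X C l r" and yy: "y \<le> y'"
    show "zphi X l r m y' * pmap M y y' = pmap N y y' * zphi X l r m y"
      using zphi_nat[OF Z y y' yy, of m] X0 Xm by simp
  qed
  show ?thesis using ihyp_interleaving[OF H] by blast
qed

lemma dI_le:
  fixes M N :: "('k::field, 'n::finite) pmod"
  assumes h: "hilbert_path_metric M N < ennreal (e ^ CARD('n))" and e: "e > 0"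
  shows "interleaving_distance M N \<le> ennreal (2 * e)"
proof -
  from h have "\<exists>c\<in>{zigzag_cost m X C l r | m X C l r. is_zigzag M N m X C l r}. c < ennreal (e ^ CARD('n))"
    unfolding hilbert_path_metric_def by (simp only: Inf_less_iff)
  then obtain m X C l r where Z: "is_zigzag M N m X C l r" and cc: "zigzag_cost m X C l r < ennreal (e ^ CARD('n))"
    by blast
  obtain \<phi> \<psi> where "interleaving (2 * e) M N \<phi> \<psi>" using zigzag_interleaving[OF Z cc] e by auto
  then have "2 * e \<in> {\<epsilon>. \<epsilon> > 0 \<and> (\<exists>\<phi> \<psi>. interleaving \<epsilon> M N \<phi> \<psi>)}" using e by auto
  then show ?thesis unfolding interleaving_distance_def by (rule Inf_lower[OF imageI])
qed

theorem mainTheorem3: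
  fixes M N :: "('k::field, 'n::finite) pmod"
  assumes "cubically_encoded M" and "cubically_encoded N"
  shows "interleaving_distance M N \<le>
           (if hilbert_path_metric M N = (Orderings.top::ennreal) then Orderings.top
            else ennreal (4 * (enn2real (hilbert_path_metric M N)) powr (1 / real CARD('n))))"
proof (cases "hilbert_path_metric M N = Orderings.top")
  case True
  then show ?thesis by simp
next
  case False
  define h where "h = enn2real (hilbert_path_metric M N)"
  define n where "n = CARD('n)"
  have n1: "n \<ge> 1" unfolding n_def by (simp add: Suc_leI)
  have hh: "hilbert_path_metric M N = ennreal h" unfolding h_def using False by (simp add: ennreal_enn2real_if)
  have h0: "h \<ge> 0" unfolding h_def by simp
  show ?thesis
  proof (cases "h = 0")
    case True
    have eps: "interleaving_distance M N \<le> 0 + ennreal d" if d: "0 < d" for d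
    proof -
      have pos: "0 < (d / 2) ^ CARD('n)" using d by simp
      have z: "hilbert_path_metric M N = 0" using hh True by simp
      have "hilbert_path_metric M N < ennreal ((d / 2) ^ CARD('n))"
        unfolding z using pos by simp
      then have "interleaving_distance M N \<le> ennreal (2 * (d / 2))"
        by (rule dI_le) (use d in simp)
      then show ?thesis by simp
    qed
    have "interleaving_distance M N \<le> 0" by (rule ennreal_le_epsilon, rule eps, assumption)
    moreover have "enn2real (hilbert_path_metric M N) = 0" using True unfolding h_def .
    ultimately show ?thesis using False by simp
  next
    case hpos: False
    then have hp: "h > 0" using h0 by simp
    define e where "e = 2 * h powr (1 / real n)"
    have ep: "e > 0" unfolding e_def using hp by simp
    have "e ^ n = 2 ^ n * (h powr (1 / real n)) ^ n" unfolding e_def by (simp add: power_mult_distrib)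
    also have "(h powr (1 / real n)) ^ n = h"
    proof -
      have "(h powr (1 / real n)) ^ n = (h powr (1 / real n)) powr real n"
        using hp by (simp add: powr_realpow)
      also have "\<dots> = h" using n1 hp by (simp add: powr_powr)
      finally show ?thesis .
    qed
    finally have en: "e ^ n = 2 ^ n * h" .
    have "h < 2 ^ n * h" using hp n1 by simp
    then have "hilbert_path_metric M N < ennreal (e ^ CARD('n))"
      unfolding hh en[unfolded n_def] n_def using h0 by (simp add: ennreal_less_iff)
    from dI_le[OF this ep] have "interleaving_distance M N \<le> ennreal (2 * e)" .
    also have "2 * e = 4 * h powr (1 / real CARD('n))" unfolding e_def n_def by simp
    finally show ?thesis using False unfolding h_def by simp
  qed
qed

end
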